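(* Let $n\ge 1$. Every equivalence class $\mathcal{E}\subseteq NS(n)$ (with respect to the equivalence relation generated by the elementary transformations (E1)–(E5) defined in the context) contains at least one member $(A;A;C;D)$ which is in canonical form.
   Context: A binary sequence is a finite sequence $A=a_1,\dots,a_n$ with $a_i\in\{\pm1\}$. Its nonperiodic autocorrelation function is $N_A(i)=\sum_{j\in\mathbb Z}a_ja_{i+j}$ ($i\in\mathbb Z$), where $a_k=0$ for $k<1$ or $k>n$. For binary sequences: $-A=-a_1,\dots,-a_n$ (negation), $A'=a_n,a_{n-1},\dots,a_1$ (reversal), $A^*=a_1,-a_2,a_3,\dots,(-1)^{n-1}a_n$ (alternation). Normal sequences: $NS(n)$ is the set of quadruples $(A;A;C;D)$ of binary sequences, all of length $n$, with the first two equal, such that $2N_A(i)+N_C(i)+N_D(i)=0$ for all $i\neq 0$. Encoding. Write $n=2m$ if $n$ is even and $n=2m+1$ if $n$ is odd. For $i=1,\dots,m$ the $i$-th quad of a pair $(X;Y)$ of sequences of length $n$ is the $2\times2$ matrix $\begin{bmatrix} x_i & x_{n+1-i}\\ y_i & y_{n+1-i}\end{bmatrix}$, and if $n$ is odd the central column is $\begin{bmatrix} x_{m+1}\\ y_{m+1}\end{bmatrix}$. Quads are labelled (rows written as pairs, first row then second row): $1=[(+,+),(+,+)]$, $2=[(+,+),(-,-)]$, $3=[(-,+),(-,+)]$, $4=[(+,-),(-,+)]$, $5=[(-,+),(+,-)]$, $6=[(+,-),(+,-)]$, $7=[(-,-),(+,+)]$, $8=[(-,-),(-,-)]$. Central columns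 are labelled $0=(+,+)^T$, $1=(+,-)^T$, $2=(-,+)^T$, $3=(-,-)^T$. A quad is symmetric if its two columns are equal (labels $1,2,7,8$) and skew otherwise (labels $3,4,5,6$); two quads have the same symmetry type if both are symmetric or both are skew. For $S=(A;A;C;D)\in NS(n)$, the pair $(A;A)$ is encoded by $p_1p_2\cdots p_m$ ($n$ even) or $p_1\cdots p_mp_{m+1}$ ($n$ odd), where $p_i$ is the label of the $i$-th quad of $(A;A)$ (necessarily in $\{1,3,6,8\}$) and $p_{m+1}$ the label of the central column; similarly $(C;D)$ is encoded by $q_1\cdots q_m$ or $q_1\cdots q_mq_{m+1}$. Elementary transformations of $(A;A;C;D)\in NS(n)$: (E1) replace both copies of $A$ by $-A$, or replace $C$ by $-C$, or replace $D$ by $-D$; (E2) replace both copies of $A$ by $A'$, or replace $C$ by $C'$, or $D$ by $D'$; (E3) interchange $C$ and $D$; (E4) replace $(C;D)$ by the pair whose encoding is obtained from that of $(C;D)$ by simultaneously replacing every quad label $4$ by $5$ and every $5$ by $4$ (the central column, if any, unchanged); this again yields an element of $NS(n)$; (E5) replace $(A;A;C;D)$ by $(A^*;A^*;C^*;D^* )$. Two members of $NS(n)$ are equivalent if one is obtained from the other by a finite sequence of elementary transformations. Canonical form: $S=(A;A;C;D)\in NS(n)$ with encodings $p_1p_2\cdots$ of $(A;A)$ and $q_1q_2\cdots$ of $(C;D)$ is in canonical form if: (i) for $n$ even $p_1=1$, and for $n>1$ odd $p_1\in\{1,6\}$; (ii) the first symmetric quad (if any) among $p_1,\dots,p_m$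 is $1$; (iii) the first skew quad (if any) among $p_1,\dots,p_m$ is $6$; (iv) if $n$ is odd and all $p_1,\dots,p_m$ are skew, then $p_{m+1}=0$; (v) if $n$ is odd and $i<m$ is the smallest index such that $p_i,p_{i+1}$ have the same symmetry type, then $p_{i+1}\in\{1,6\}$; if $n$ is odd, there is no such index, and $p_m$ is symmetric, then $p_{m+1}=0$; (vi) $q_1\in\{1,6\}$ if $n>1$; (vii) the first symmetric quad (if any) among $q_1,\dots,q_m$ is $1$; (viii) the first skew quad (if any) among $q_1,\dots,q_m$ is $6$; (ix) if $i$ is the least index with $q_i\in\{2,7\}$ then $q_i=2$; (x) if $i$ is the least index with $q_i\in\{4,5\}$ then $q_i=4$; (xi) if $n$ is odd and $q_i\neq 2$ for all $i\le m$, then $q_{m+1}\neq 2$; (xii) if $n$ is odd and $q_i\neq 1$ for all $i\le m$, then $q_{m+1}=0$. *)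

theory Defs
  imports Main
begin

text \<open>Binary sequences are lists of integers with entries in {1,-1};
  the paper's a_1..a_n is the list a!0 .. a!(n-1).\<close>

definition binary_seq :: "int list \<Rightarrow> bool" where
  "binary_seq A \<longleftrightarrow> set A \<subseteq> {1, -1}"

text \<open>a_k with the convention a_k = 0 for k < 1 or k > n (1-based index k).\<close>
definition entry :: "int list \<Rightarrow> int \<Rightarrow> int" where
  "entry A k = (if 1 \<le> k \<and> k \<le> int (length A) then A ! (nat k - 1) else 0)"

definition NACF :: "int list \<Rightarrow> int \<Rightarrow> int" where
  "NACF A i = (\<Sum>j\<in>{1..int (length A)}. entry A j * entry A (i + j))"

definition negseq :: "int list \<Rightarrow> int list" where
  "negseq A = map uminus A"

definition revseq :: "int list \<Rightarrow> int list" where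
  "revseq A = rev A"

definition altseq :: "int list \<Rightarrow> int list" where
  "altseq A = map (\<lambda>k. (-1) ^ k * A ! k) [0..<length A]"

type_synonym quadruple = "int list \<times> int list \<times> int list \<times> int list"

definition NS :: "nat \<Rightarrow> quadruple set" where
  "NS n = {(A, B, C, D). binary_seq A \<and> binary_seq B \<and> binary_seq C \<and> binary_seq D \<and>
      length A = n \<and> length B = n \<and> length C = n \<and> length D = n \<and> A = B \<and>
      (\<forall>i::int. i \<noteq> 0 \<longrightarrow> 2 * NACF A i + NACF C i + NACF D i = 0)}"

text \<open>Label of the quad [(a,b),(c,d)] (first row (a,b), second row (c,d));
  0 means "not one of the eight labelled quads".\<close>
definition qlabel :: "int \<Rightarrow> int \<Rightarrow> int \<Rightarrow> int \<Rightarrow> nat" where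
  "qlabel a b c d =
     (if (a, b, c, d) = (1, 1, 1, 1) then 1
      else if (a, b, c, d) = (1, 1, -1, -1) then 2
      else if (a, b, c, d) = (-1, 1, -1, 1) then 3
      else if (a, b, c, d) = (1, -1, -1, 1) then 4
      else if (a, b, c, d) = (-1, 1, 1, -1) then 5
      else if (a, b, c, d) = (1, -1, 1, -1) then 6
      else if (a, b, c, d) = (-1, -1, 1, 1) then 7
      else if (a, b, c, d) = (-1, -1, -1, -1) then 8
      else 0)"

text \<open>Label of a central column (a,c)^T; 4 means unlabelled.\<close>
definition clabel :: "int \<Rightarrow> int \<Rightarrow> nat" where
  "clabel a c =
     (if (a, c) = (1, 1) then 0
      else if (a, c) = (1, -1) then 1
      else if (a, c) = (-1, 1) then 2
      else if (a, c) = (-1, -1) then 3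
      else 4)"

text \<open>i-th quad (1 \<le> i \<le> m) of the pair (X;Y): [[x_i, x_(n+1-i)],[y_i, y_(n+1-i)]].\<close>
definition quad :: "int list \<Rightarrow> int list \<Rightarrow> nat \<Rightarrow> nat" where
  "quad X Y i = (let n = length X in
      qlabel (X ! (i - 1)) (X ! (n - i)) (Y ! (i - 1)) (Y ! (n - i)))"

text \<open>Central column (x_(m+1), y_(m+1)) for odd n = 2m+1.\<close>
definition central :: "int list \<Rightarrow> int list \<Rightarrow> nat" where
  "central X Y = (let m = length X div 2 in clabel (X ! m) (Y ! m))"

definition symq :: "nat \<Rightarrow> bool" where
  "symq l \<longleftrightarrow> l \<in> {1, 2, 7, 8}"

definition skewq :: "nat \<Rightarrow> bool" where
  "skewq l \<longleftrightarrow> l \<in> {3, 4, 5, 6}"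

definition same_type :: "nat \<Rightarrow> nat \<Rightarrow> bool" where
  "same_type l l' \<longleftrightarrow> (symq l \<and> symq l') \<or> (skewq l \<and> skewq l')"

text \<open>(E4): quads labelled 4 become 5 and vice versa; this amounts to negating the
  four entries of that quad.  Position k (0-based) belongs to quad min(k+1, n-k).\<close>
definition flip45 :: "int list \<Rightarrow> int list \<Rightarrow> nat \<Rightarrow> bool" where
  "flip45 C D k = (let n = length C; i = min (Suc k) (n - k) in
      1 \<le> i \<and> i \<le> n div 2 \<and> quad C D i \<in> {4, 5})"

definition swap45 :: "int list \<Rightarrow> int list \<Rightarrow> int list \<times> int list" where
  "swap45 C D =
     (map (\<lambda>k. if flip45 C D k then - (C ! k) else C ! k) [0..<length C],
      map (\<lambda>k. if flip45 C D k then - (D ! k) else D ! k) [0..<length D])"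

definition elem_step :: "quadruple \<Rightarrow> quadruple \<Rightarrow> bool" where
  "elem_step S T \<longleftrightarrow> (case S of (A, B, C, D) \<Rightarrow>
      T = (negseq A, negseq B, C, D) \<or> T = (A, B, negseq C, D) \<or> T = (A, B, C, negseq D) \<or>
      T = (revseq A, revseq B, C, D) \<or> T = (A, B, revseq C, D) \<or> T = (A, B, C, revseq D) \<or>
      T = (A, B, D, C) \<or>
      T = (A, B, fst (swap45 C D), snd (swap45 C D)) \<or>
      T = (altseq A, altseq B, altseq C, altseq D))"

definition NS_equiv :: "nat \<Rightarrow> quadruple \<Rightarrow> quadruple \<Rightarrow> bool" where
  "NS_equiv n = (\<lambda>S T. S \<in> NS n \<and> T \<in> NS n \<and> (elem_step S T \<or> elem_step T S))\<^sup>*\<^sup>*"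

definition canonical :: "quadruple \<Rightarrow> bool" where
  "canonical S \<longleftrightarrow> (case S of (A, B, C, D) \<Rightarrow>
    (let n = length A; m = n div 2;
         p = quad A A; q = quad C D; pc = central A A; qc = central C D in
      \<comment> \<open>(i)\<close>
      (even n \<longrightarrow> p 1 = 1) \<and>
      (odd n \<and> n > 1 \<longrightarrow> p 1 \<in> {1, 6}) \<and>
      \<comment> \<open>(ii)\<close>
      (\<forall>i\<in>{1..m}. symq (p i) \<and> (\<forall>j\<in>{1..<i}. \<not> symq (p j)) \<longrightarrow> p i = 1) \<and>
      \<comment> \<open>(iii)\<close>
      (\<forall>i\<in>{1..m}. skewq (p i) \<and> (\<forall>j\<in>{1..<i}. \<not> skewq (p j)) \<longrightarrow> p i = 6) \<and>
      \<comment> \<open>(iv)\<close>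
      (odd n \<and> (\<forall>i\<in>{1..m}. skewq (p i)) \<longrightarrow> pc = 0) \<and>
      \<comment> \<open>(v)\<close>
      (odd n \<longrightarrow>
         (\<forall>i\<in>{1..<m}. same_type (p i) (p (i + 1)) \<and>
              (\<forall>j\<in>{1..<i}. \<not> same_type (p j) (p (j + 1))) \<longrightarrow> p (i + 1) \<in> {1, 6}) \<and>
         ((\<forall>i\<in>{1..<m}. \<not> same_type (p i) (p (i + 1))) \<and> m \<ge> 1 \<and> symq (p m) \<longrightarrow> pc = 0)) \<and>
      \<comment> \<open>(vi)\<close>
      (n > 1 \<longrightarrow> q 1 \<in> {1, 6}) \<and>
      \<comment> \<open>(vii)\<close>
      (\<forall>i\<in>{1..m}. symq (q i) \<and> (\<forall>j\<in>{1..<i}. \<not> symq (q j)) \<longrightarrow> q i = 1) \<and>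
      \<comment> \<open>(viii)\<close>
      (\<forall>i\<in>{1..m}. skewq (q i) \<and> (\<forall>j\<in>{1..<i}. \<not> skewq (q j)) \<longrightarrow> q i = 6) \<and>
      \<comment> \<open>(ix)\<close>
      (\<forall>i\<in>{1..m}. q i \<in> {2, 7} \<and> (\<forall>j\<in>{1..<i}. q j \<notin> {2, 7}) \<longrightarrow> q i = 2) \<and>
      \<comment> \<open>(x)\<close>
      (\<forall>i\<in>{1..m}. q i \<in> {4, 5} \<and> (\<forall>j\<in>{1..<i}. q j \<notin> {4, 5}) \<longrightarrow> q i = 4) \<and>
      \<comment> \<open>(xi)\<close>
      (odd n \<and> (\<forall>i\<in>{1..m}. q i \<noteq> 2) \<longrightarrow> qc \<noteq> 2) \<and>
      \<comment> \<open>(xii)\<close>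
      (odd n \<and> (\<forall>i\<in>{1..m}. q i \<noteq> 1) \<longrightarrow> qc = 0)))"

end

theory Submission
  imports Defs
begin


lemma entry_out: "k < 1 \<or> k > int (length A) \<Longrightarrow> entry A k = 0"
  by (auto simp: entry_def)

lemma NACF_restrict:
  "NACF A i = (\<Sum>j\<in>{1..int (length A)} \<inter> {1-i..int (length A)-i}. entry A j * entry A (i+j))"
  unfolding NACF_def
  by (rule sum.mono_neutral_right) (auto simp: entry_def)

lemma NACF_sym: "NACF A (-i) = NACF A i"
proof -
  let ?n = "int (length A)"
  have "NACF A (-i) = (\<Sum>j\<in>{1..?n} \<inter> {1+i..?n+i}. entry A j * entry A (-i+j))"
    using NACF_restrict[of A "-i"] by simp
  also have "\<dots> = (\<Sum>k\<in>{1..?n} \<inter> {1-i..?n-i}. entry A k * entry A (i+k))"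
    by (rule sum.reindex_bij_witness[of _ "\<lambda>k. k+i" "\<lambda>j. j-i"]) (auto simp: algebra_simps)
  also have "\<dots> = NACF A i" using NACF_restrict[of A i] by simp
  finally show ?thesis .
qed

lemma entry_neg: "entry (negseq A) k = - entry A k"
  by (auto simp: entry_def negseq_def)

lemma NACF_neg: "NACF (negseq A) i = NACF A i"
proof -
  have "length (negseq A) = length A" by (simp add: negseq_def)
  then show ?thesis unfolding NACF_def entry_neg by simp
qed

lemma entry_rev: "entry (revseq A) k = entry A (int (length A) + 1 - k)"
proof -
  have e: "nat (int (length A) + 1) = Suc (length A)" by simp
  show ?thesis by (auto simp: entry_def revseq_def rev_nth e nat_diff_distrib)
qed

lemma NACF_rev: "NACF (revseq A) i = NACF A i"
proof -
  let ?n = "int (length A)"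
  have "NACF (revseq A) i = (\<Sum>j\<in>{1..?n}. entry A (?n+1-j) * entry A (?n+1-(i+j)))"
  proof -
    have "length (revseq A) = length A" by (simp add: revseq_def)
    then show ?thesis unfolding NACF_def entry_rev by (simp add: algebra_simps)
  qed
  also have "\<dots> = (\<Sum>k\<in>{1..?n}. entry A k * entry A (-i+k))"
    by (rule sum.reindex_bij_witness[of _ "\<lambda>k. ?n+1-k" "\<lambda>j. ?n+1-j"]) (auto simp: algebra_simps)
  also have "\<dots> = NACF A (-i)" by (simp add: NACF_def)
  finally show ?thesis by (simp add: NACF_sym)
qed

lemma entry_alt: "entry (altseq A) k = (if even k then -1 else 1) * entry A k"
proof (cases "1 \<le> k \<and> k \<le> int (length A)")
  case True
  then obtain j where j: "k = int j + 1" "j < length A"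
  proof -
    show ?thesis using True by (intro that[of "nat (k - 1)"]) auto
  qed
  have "(-1::int)^j = (if even k then -1 else 1)" using j by (auto simp: even_add)
  have e: "nat (int j + 1) = Suc j" by simp
  then show ?thesis using True j \<open>(-1::int)^j = _\<close> by (simp add: entry_def altseq_def e)
qed (auto simp: entry_def altseq_def)

lemma NACF_alt: "NACF (altseq A) i = (if even i then 1 else -1) * NACF A i"
proof -
  have len: "length (altseq A) = length A" by (simp add: altseq_def)
  have "NACF (altseq A) i = (\<Sum>j\<in>{1..int (length A)}. (if even i then 1 else -1) * (entry A j * entry A (i+j)))"
    unfolding NACF_def len entry_alt by (rule sum.cong) (auto simp: even_add)
  then show ?thesis by (simp add: NACF_def sum_distrib_left)
qed


lemma pm4: "(a::int) \<in> {1,-1} \<Longrightarrow> b \<in> {1,-1} \<Longrightarrow> c \<in> {1,-1} \<Longrightarrow> d \<in> {1,-1} \<Longrightarrow> 4 dvd (a+b+c+d) \<Longrightarrow> a*c = b*d"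
  by (elim insertE emptyE; simp)

lemma binary_entry: "binary_seq A \<Longrightarrow> 1 \<le> k \<Longrightarrow> k \<le> int (length A) \<Longrightarrow> entry A k = 1 \<or> entry A k = -1"
proof -
  assume a: "binary_seq A" "1 \<le> k" "k \<le> int (length A)"
  then have "nat k - 1 < length A" by linarith
  then have "A ! (nat k - 1) \<in> set A" by (rule nth_mem)
  then have "A ! (nat k - 1) \<in> {1,-1}" using a(1) unfolding binary_seq_def by blast
  then show ?thesis using a unfolding entry_def by auto
qed

lemma NACF_top:
  assumes "1 \<le> k" "k \<le> int (length A)"
  shows "NACF A (int (length A) - k) = (\<Sum>j\<in>{1..k}. entry A j * entry A (int (length A) - k + j))"
proof -
  have "{1..int (length A)} \<inter> {1 - (int (length A) - k)..int (length A) - (int (length A) - k)} = {1..k}"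
    using assms by auto
  then show ?thesis by (subst NACF_restrict) (simp only:)
qed

lemma pm_prod_mod4: "(x::int) \<in> {1,-1} \<Longrightarrow> y \<in> {1,-1} \<Longrightarrow> 4 dvd (x*y - x - y + 1)"
  by auto

lemma pm_prod_mod4b: "(x::int) \<in> {1,-1} \<Longrightarrow> y \<in> {1,-1} \<Longrightarrow> 4 dvd (2*(x*y) - 2)"
  by auto

lemma NACF_top_mod4:
  assumes "binary_seq A" "1 \<le> k" "k < int (length A)"
  shows "4 dvd (NACF A (int (length A) - k) - (\<Sum>j\<in>{1..k}. entry A j + entry A (int (length A) - k + j)) + k)"
proof -
  let ?n = "int (length A)"
  have "NACF A (?n - k) - (\<Sum>j\<in>{1..k}. entry A j + entry A (?n - k + j)) + k =
        (\<Sum>j\<in>{1..k}. entry A j * entry A (?n - k + j) - entry A j - entry A (?n - k + j) + 1)"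
    using assms by (simp add: NACF_top sum_subtractf sum.distrib)
  moreover have "4 dvd (\<Sum>j\<in>{1..k}. entry A j * entry A (?n - k + j) - entry A j - entry A (?n - k + j) + 1)"
    apply (rule dvd_sum)
    apply (rule pm_prod_mod4)
    using assms binary_entry[OF assms(1)] by auto
  ultimately show ?thesis by simp
qed

lemma NACF_top_mod4b:
  assumes "binary_seq A" "1 \<le> k" "k < int (length A)"
  shows "4 dvd (2 * NACF A (int (length A) - k) - 2 * k)"
proof -
  let ?n = "int (length A)"
  have "2 * NACF A (?n - k) - 2 * k =
        (\<Sum>j\<in>{1..k}. 2 * (entry A j * entry A (?n - k + j)) - 2)"
    using assms by (simp add: NACF_top sum_subtractf sum_distrib_left)
  moreover have "4 dvd (\<Sum>j\<in>{1..k}. 2 * (entry A j * entry A (?n - k + j)) - 2)"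
    apply (rule dvd_sum)
    apply (rule pm_prod_mod4b)
    using assms binary_entry[OF assms(1)] by auto
  ultimately show ?thesis by simp
qed

lemma sum_top_reindex:
  "(\<Sum>j\<in>{1..k}. f (n - k + j)) = (\<Sum>j\<in>{1..k}. f (n + 1 - j::int))"
  by (rule sum.reindex_bij_witness[of _ "\<lambda>j. k+1-j" "\<lambda>j. k+1-j"]) (auto simp: algebra_simps)

lemma structural_W:
  assumes S: "(A, A, C, D) \<in> NS n" and k: "1 \<le> k" "k < int n"
  shows "4 dvd (\<Sum>j\<in>{1..k}. entry C j + entry D j + entry C (int n + 1 - j) + entry D (int n + 1 - j))"
proof -
  from S have bA: "binary_seq A" and bC: "binary_seq C" and bD: "binary_seq D"
    and l: "length A = n" "length C = n" "length D = n"
    and eq: "2 * NACF A (int n - k) + NACF C (int n - k) + NACF D (int n - k) = 0"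
    using k by (auto simp: NS_def)
  have 1: "4 dvd (NACF C (int n - k) - (\<Sum>j\<in>{1..k}. entry C j + entry C (int n - k + j)) + k)"
    using NACF_top_mod4[OF bC] k l by auto
  have 2: "4 dvd (NACF D (int n - k) - (\<Sum>j\<in>{1..k}. entry D j + entry D (int n - k + j)) + k)"
    using NACF_top_mod4[OF bD] k l by auto
  have 3: "4 dvd (2 * NACF A (int n - k) - 2 * k)"
    using NACF_top_mod4b[OF bA] k l by auto
  have 4: "4 dvd ((NACF C (int n - k) - (\<Sum>j\<in>{1..k}. entry C j + entry C (int n - k + j)) + k)
     + (NACF D (int n - k) - (\<Sum>j\<in>{1..k}. entry D j + entry D (int n - k + j)) + k)
     + (2 * NACF A (int n - k) - 2 * k))"
    using dvd_add[OF dvd_add[OF 1 2] 3] .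
  then have "4 dvd ((\<Sum>j\<in>{1..k}. entry C j + entry C (int n - k + j)) + (\<Sum>j\<in>{1..k}. entry D j + entry D (int n - k + j)))"
  proof -
    have "((NACF C (int n - k) - (\<Sum>j\<in>{1..k}. entry C j + entry C (int n - k + j)) + k)
     + (NACF D (int n - k) - (\<Sum>j\<in>{1..k}. entry D j + entry D (int n - k + j)) + k)
     + (2 * NACF A (int n - k) - 2 * k)) = - ((\<Sum>j\<in>{1..k}. entry C j + entry C (int n - k + j)) + (\<Sum>j\<in>{1..k}. entry D j + entry D (int n - k + j)))"
      using eq by linarith
    with 4 show ?thesis by (metis dvd_minus_iff)
  qed
  moreover have "(\<Sum>j\<in>{1..k}. entry C j + entry C (int n - k + j)) = (\<Sum>j\<in>{1..k}. entry C j) + (\<Sum>j\<in>{1..k}. entry C (int n + 1 - j))"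
    by (simp only: sum.distrib sum_top_reindex[of "entry C"])
  moreover have "(\<Sum>j\<in>{1..k}. entry D j + entry D (int n - k + j)) = (\<Sum>j\<in>{1..k}. entry D j) + (\<Sum>j\<in>{1..k}. entry D (int n + 1 - j))"
    by (simp only: sum.distrib sum_top_reindex[of "entry D"])
  moreover have "(\<Sum>j\<in>{1..k}. entry C j + entry D j + entry C (int n + 1 - j) + entry D (int n + 1 - j)) =
     (\<Sum>j\<in>{1..k}. entry C j) + (\<Sum>j\<in>{1..k}. entry C (int n + 1 - j)) + ((\<Sum>j\<in>{1..k}. entry D j) + (\<Sum>j\<in>{1..k}. entry D (int n + 1 - j)))"
    by (simp only: sum.distrib add.assoc add.left_commute)
  ultimately show ?thesis by simp
qed

lemma structural:
  assumes S: "(A, A, C, D) \<in> NS n" and k: "1 \<le> k" "k < int n"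
  shows "entry C k * entry C (int n + 1 - k) = entry D k * entry D (int n + 1 - k)"
proof -
  define w where "w = (\<lambda>j. entry C j + entry D j + entry C (int n + 1 - j) + entry D (int n + 1 - j))"
  have W: "4 dvd sum w {1..k}" using structural_W[OF S k] unfolding w_def .
  have W': "4 dvd sum w {1..k-1}"
  proof (cases "k = 1")
    case True then show ?thesis by simp
  next
    case False
    then have "1 \<le> k - 1" "k - 1 < int n" using k by auto
    from structural_W[OF S this] show ?thesis unfolding w_def .
  qed
  have split: "{1..k} = insert k {1..k-1}" using k by auto
  have "sum w {1..k} = w k + sum w {1..k-1}"
    unfolding split by (subst sum.insert) auto
  then have wk: "w k = sum w {1..k} - sum w {1..k-1}" by simp
  have "4 dvd w k" unfolding wk using W W' by (rule dvd_diff)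
  moreover from S have bC: "binary_seq C" and bD: "binary_seq D" and l: "length C = n" "length D = n"
    by (auto simp: NS_def)
  have k2: "1 \<le> int n + 1 - k" "int n + 1 - k \<le> int n" using k by auto
  have "entry C k \<in> {1,-1}" using binary_entry[OF bC] k l by auto
  moreover have "entry D k \<in> {1,-1}" using binary_entry[OF bD] k l by auto
  moreover have "entry C (int n + 1 - k) \<in> {1,-1}" using binary_entry[OF bC k2[unfolded l[symmetric]]] l by auto
  moreover have "entry D (int n + 1 - k) \<in> {1,-1}" using binary_entry[OF bD] k2 l by auto
  ultimately show ?thesis using pm4[of "entry C k" "entry D k" "entry C (int n + 1 - k)" "entry D (int n + 1 - k)"]
    unfolding w_def by blast
qed


lemma qlabel_4: "qlabel x y u v = 4 \<longleftrightarrow> (x = 1 \<and> y = -1 \<and> u = -1 \<and> v = 1)"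
proof
  assume "qlabel x y u v = 4" then show "x = 1 \<and> y = -1 \<and> u = -1 \<and> v = 1"
    unfolding qlabel_def by (simp split: if_split_asm)
qed (simp add: qlabel_def)

lemma qlabel_5: "qlabel x y u v = 5 \<longleftrightarrow> (x = -1 \<and> y = 1 \<and> u = 1 \<and> v = -1)"
proof
  assume "qlabel x y u v = 5" then show "x = -1 \<and> y = 1 \<and> u = 1 \<and> v = -1"
    unfolding qlabel_def by (simp split: if_split_asm)
qed (simp add: qlabel_def)

lemma qlabel_45: "qlabel x y u v \<in> {4,5} \<longleftrightarrow> (x \<in> {1,-1} \<and> y = -x \<and> u = -x \<and> v = x)"
  using qlabel_4[of x y u v] qlabel_5[of x y u v] by auto

definition fl :: "int list \<Rightarrow> int list \<Rightarrow> int \<Rightarrow> bool" where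
  "fl C D k \<longleftrightarrow> 1 \<le> k \<and> k \<le> int (length C) \<and> flip45 C D (nat k - 1)"

lemma entry_nth: "1 \<le> i \<Longrightarrow> i \<le> length X \<Longrightarrow> X ! (i - 1) = entry X (int i)"
  by (simp add: entry_def)

lemma entry_nth2: "1 \<le> i \<Longrightarrow> i \<le> length X \<Longrightarrow> X ! (length X - i) = entry X (int (length X) + 1 - int i)"
proof -
  assume a: "1 \<le> i" "i \<le> length X"
  then have "nat (int (length X) + 1 - int i) = length X + 1 - i" by auto
  then show ?thesis using a by (simp add: entry_def)
qed

lemma fl_char:
  assumes l: "length D = length C" and k: "1 \<le> k" "k \<le> int (length C)"
  shows "fl C D k \<longleftrightarrow> 2 * k \<noteq> int (length C) + 1 \<and>
     entry C k \<in> {1,-1} \<and> entry C (int (length C) + 1 - k) = - entry C k \<and>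
     entry D k = - entry C k \<and> entry D (int (length C) + 1 - k) = entry C k"
proof -
  define n where "n = length C"
  define j where "j = nat k"
  have j: "k = int j" "1 \<le> j" "j \<le> n" using k unfolding n_def j_def by auto
  have nk: "nat k - 1 = j - 1" using j by simp
  show ?thesis
  proof (cases "j \<le> n + 1 - j")
    case True
    then have mi: "min (Suc (j - 1)) (n - (j - 1)) = j" using j by auto
    have dv: "(1 \<le> j \<and> j \<le> n div 2) \<longleftrightarrow> 2 * k \<noteq> int n + 1" using True j by auto
    show ?thesis unfolding fl_def flip45_def Let_def quad_def nk n_def[symmetric] mi
      using True j l k entry_nth[of j C] entry_nth[of j D] entry_nth2[of j C] entry_nth2[of j D]
      unfolding n_def[symmetric] dv by (auto simp: qlabel_4 qlabel_5)
  next
    case False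
    then have mi: "min (Suc (j - 1)) (n - (j - 1)) = n + 1 - j" using j by auto
    have e1: "int (n + 1 - j) = int n + 1 - k" using j False by auto
    have e2: "int n + 1 - int (n + 1 - j) = k" using j False by auto
    have dv: "(1 \<le> n + 1 - j \<and> n + 1 - j \<le> n div 2) \<longleftrightarrow> 2 * k \<noteq> int n + 1" using False j by auto
    show ?thesis unfolding fl_def flip45_def Let_def quad_def nk n_def[symmetric] mi
      using False j l k entry_nth[of "n+1-j" C] entry_nth[of "n+1-j" D] entry_nth2[of "n+1-j" C] entry_nth2[of "n+1-j" D]
      unfolding n_def[symmetric] e1 e2 dv by (auto simp: qlabel_4 qlabel_5)
  qed
qed


lemma swap45_len: "length (fst (swap45 C D)) = length C" "length (snd (swap45 C D)) = length D"
  by (auto simp: swap45_def)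

lemma entry_swap45:
  assumes l: "length D = length C"
  shows "entry (fst (swap45 C D)) k = (if fl C D k then -1 else 1) * entry C k"
        "entry (snd (swap45 C D)) k = (if fl C D k then -1 else 1) * entry D k"
  using l by (auto simp: entry_def swap45_def fl_def nat_less_iff)

lemma fl_range: "fl C D k \<Longrightarrow> 1 \<le> k \<and> k \<le> int (length C)"
  by (simp add: fl_def)

lemma fl_mirror:
  assumes l: "length D = length C" and k: "1 \<le> k" "k \<le> int (length C)"
  shows "fl C D (int (length C) + 1 - k) = fl C D k"
proof -
  have k2: "1 \<le> int (length C) + 1 - k" "int (length C) + 1 - k \<le> int (length C)" using k by auto
  show ?thesis unfolding fl_char[OF l k] fl_char[OF l k2] by auto
qed

lemma fl_props:
  assumes l: "length D = length C" and f: "fl C D k"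
  shows "entry C (int (length C) + 1 - k) = - entry C k \<and>
     entry D k = - entry C k \<and> entry D (int (length C) + 1 - k) = - entry D k"
proof -
  have k: "1 \<le> k" "k \<le> int (length C)" using fl_range[OF f] by auto
  show ?thesis using f unfolding fl_char[OF l k] by auto
qed

lemma nonfl_props:
  assumes S: "(A, A, C, D) \<in> NS n" and k: "1 \<le> k" "k \<le> int n" and nf: "\<not> fl C D k"
  shows "entry C (int n + 1 - k) - entry D (int n + 1 - k) = entry C k - entry D k"
proof -
  from S have bC: "binary_seq C" and bD: "binary_seq D" and l: "length C = n" "length D = n"
    by (auto simp: NS_def)
  have k2: "1 \<le> int n + 1 - k" "int n + 1 - k \<le> int n" using k by auto
  have c1: "entry C k \<in> {1,-1}" "entry D k \<in> {1,-1}" using binary_entry[OF bC] binary_entry[OF bD] k l by auto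
  have st: "entry C k * entry C (int n + 1 - k) = entry D k * entry D (int n + 1 - k)"
  proof (cases "k < int n")
    case True then show ?thesis using structural[OF S k(1)] by simp
  next
    case False
    then have kn: "k = int n" using k by simp
    show ?thesis
    proof (cases "n = 1")
      case True then show ?thesis using kn c1 by auto
    next
      case False
      then have "1 < int n" using k by auto
      from structural[OF S _ this] kn show ?thesis by (simp add: mult.commute)
    qed
  qed
  have c2: "entry C (int n + 1 - k) \<in> {1,-1}" "entry D (int n + 1 - k) \<in> {1,-1}"
    using binary_entry[OF bC] binary_entry[OF bD] k2 l by auto
  have "\<not> (2 * k \<noteq> int n + 1 \<and>
     entry C k \<in> {1,-1} \<and> entry C (int n + 1 - k) = - entry C k \<and>
     entry D k = - entry C k \<and> entry D (int n + 1 - k) = entry C k)"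
    using nf fl_char[of D C k] l k by auto
  show ?thesis
  proof (cases "2 * k = int n + 1")
    case True
    then have "int n + 1 - k = k" by simp
    then show ?thesis by simp
  next
    case False
    then show ?thesis using st c1 c2 \<open>\<not> (_ \<and> _)\<close> by auto
  qed
qed


lemma pair_flip:
  assumes S: "(A, A, C, D) \<in> NS n" and a: "fl C D a" and b: "1 \<le> b" "b \<le> int n" "\<not> fl C D b"
  shows "entry C (int n + 1 - a) * entry C (int n + 1 - b) + entry D (int n + 1 - a) * entry D (int n + 1 - b)
       = - (entry C a * entry C b + entry D a * entry D b)"
proof -
  from S have l: "length C = n" "length D = n" by (auto simp: NS_def)
  have fa: "entry C (int n + 1 - a) = - entry C a" "entry D a = - entry C a" "entry D (int n + 1 - a) = - entry D a"
    using fl_props[OF _ a] l by auto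
  have nb: "entry C (int n + 1 - b) = entry D (int n + 1 - b) + entry C b - entry D b"
    using nonfl_props[OF S b] by simp
  show ?thesis unfolding nb fa(1) fa(3) unfolding fa(2) by (simp add: algebra_simps)
qed

lemma E4_NACF:
  assumes S: "(A, A, C, D) \<in> NS n"
  shows "NACF (fst (swap45 C D)) s + NACF (snd (swap45 C D)) s = NACF C s + NACF D s"
proof -
  from S have l: "length C = n" "length D = n" by (auto simp: NS_def)
  define sg where "sg = (\<lambda>j. if fl C D j then -1 else (1::int))"
  define g where "g = (\<lambda>j. entry C j * entry C (s+j) + entry D j * entry D (s+j))"
  define h where "h = (\<lambda>j. (sg j * sg (s+j) - 1) * g j)"
  define J where "J = {1..int n} \<inter> {1-s..int n-s}"
  have lhs: "NACF (fst (swap45 C D)) s + NACF (snd (swap45 C D)) s = (\<Sum>j\<in>{1..int n}. sg j * sg (s+j) * g j)"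
    unfolding NACF_def swap45_len entry_swap45[of D C, OF l(2)[folded l(1)]] l g_def sg_def
    by (simp add: sum.distrib[symmetric] algebra_simps)
  have rhs: "NACF C s + NACF D s = (\<Sum>j\<in>{1..int n}. g j)"
    unfolding NACF_def l g_def by (simp add: sum.distrib)
  have diff: "(\<Sum>j\<in>{1..int n}. sg j * sg (s+j) * g j) - (\<Sum>j\<in>{1..int n}. g j) = sum h {1..int n}"
    unfolding h_def by (simp add: sum_subtractf[symmetric] algebra_simps)
  have hJ: "sum h {1..int n} = sum h J"
    unfolding J_def by (rule sum.mono_neutral_right) (auto simp: h_def g_def entry_def l)
  have refl: "sum h J = sum (\<lambda>j. h (int n + 1 - s - j)) J"
    unfolding J_def by (rule sum.reindex_bij_witness[of _ "\<lambda>j. int n + 1 - s - j" "\<lambda>j. int n + 1 - s - j"]) auto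
  have neg: "h (int n + 1 - s - j) = - h j" if j: "j \<in> J" for j
  proof -
    have a: "1 \<le> j" "j \<le> int n" and b: "1 \<le> s + j" "s + j \<le> int n" using j by (auto simp: J_def)
    have m1: "int n + 1 - s - j = int n + 1 - (s + j)" by simp
    have m2: "s + (int n + 1 - s - j) = int n + 1 - j" by simp
    have sga: "sg (int n + 1 - j) = sg j" using fl_mirror[of D C j] a l by (simp add: sg_def)
    have sgb: "sg (int n + 1 - (s+j)) = sg (s+j)" using fl_mirror[of D C "s+j"] b l by (simp add: sg_def)
    show ?thesis
    proof (cases "fl C D j = fl C D (s+j)")
      case True
      then have "sg j * sg (s+j) = 1" by (simp add: sg_def)
      then show ?thesis unfolding h_def m2 unfolding m1 sga sgb by (simp add: mult.commute)
    next
      case False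
      show ?thesis
      proof (cases "fl C D j")
        case True
        with False have nb: "\<not> fl C D (s+j)" by simp
        have "g (int n + 1 - (s + j)) = - g j"
          unfolding g_def m2[unfolded m1] using pair_flip[OF S True b nb] by (simp add: algebra_simps)
        then show ?thesis unfolding h_def m2 unfolding m1 sga sgb by simp
      next
        case fa: False
        with False have fb: "fl C D (s+j)" by simp
        have "g (int n + 1 - (s + j)) = - g j"
          unfolding g_def m2[unfolded m1] using pair_flip[OF S fb a fa] by (simp add: algebra_simps)
        then show ?thesis unfolding h_def m2 unfolding m1 sga sgb by simp
      qed
    qed
  qed
  have "sum h J = - sum h J"
    using refl neg by (simp add: sum_negf)
  then have "sum h J = 0" by simp
  then show ?thesis using lhs rhs diff hJ by simp
qed


lemma bin_neg: "binary_seq A \<Longrightarrow> binary_seq (negseq A)"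
  by (auto simp: binary_seq_def negseq_def)
lemma bin_rev: "binary_seq A \<Longrightarrow> binary_seq (revseq A)"
  by (auto simp: binary_seq_def revseq_def)
lemma bin_nth: "binary_seq A \<Longrightarrow> k < length A \<Longrightarrow> A ! k = 1 \<or> A ! k = -1"
  unfolding binary_seq_def using nth_mem by blast
lemma bin_iff: "binary_seq A \<longleftrightarrow> (\<forall>k<length A. A ! k = 1 \<or> A ! k = -1)"
proof
  assume "binary_seq A"
  then show "\<forall>k<length A. A ! k = 1 \<or> A ! k = -1" using bin_nth by blast
next
  assume "\<forall>k<length A. A ! k = 1 \<or> A ! k = -1"
  then show "binary_seq A" unfolding binary_seq_def by (auto simp: in_set_conv_nth)
qed
lemma pow_m1: "(-1::int)^k = 1 \<or> (-1::int)^k = -1"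
  by (cases "even k") auto
lemma bin_alt: "binary_seq A \<Longrightarrow> binary_seq (altseq A)"
  unfolding bin_iff altseq_def
  apply clarsimp
  subgoal for k using pow_m1[of k] by (elim disjE; auto)
  done
lemma bin_swap45: "binary_seq C \<Longrightarrow> binary_seq D \<Longrightarrow> length D = length C \<Longrightarrow>
   binary_seq (fst (swap45 C D)) \<and> binary_seq (snd (swap45 C D))"
  unfolding bin_iff swap45_def by auto
lemma len_ops: "length (negseq A) = length A" "length (revseq A) = length A" "length (altseq A) = length A"
  by (auto simp: negseq_def revseq_def altseq_def)

lemma NS_iff: "(A, B, C, D) \<in> NS n \<longleftrightarrow> binary_seq A \<and> binary_seq C \<and> binary_seq D \<and>
      length A = n \<and> length C = n \<and> length D = n \<and> B = A \<and>
      (\<forall>i::int. i \<noteq> 0 \<longrightarrow> 2 * NACF A i + NACF C i + NACF D i = 0)"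
  unfolding NS_def by auto

lemma equiv_step: "S \<in> NS n \<Longrightarrow> T \<in> NS n \<Longrightarrow> elem_step S T \<Longrightarrow> NS_equiv n S T"
  unfolding NS_equiv_def by (rule r_into_rtranclp) auto

lemma equiv_trans: "NS_equiv n S T \<Longrightarrow> NS_equiv n T U \<Longrightarrow> NS_equiv n S U"
  unfolding NS_equiv_def by (rule rtranclp_trans)

lemma equiv_refl: "NS_equiv n S S"
  unfolding NS_equiv_def by simp

lemma step_gen: "S \<in> NS n \<Longrightarrow> T \<in> NS n \<Longrightarrow> elem_step S T \<Longrightarrow> T \<in> NS n \<and> NS_equiv n S T"
  using equiv_step by blast

lemma step_negA: assumes "(A,A,C,D) \<in> NS n"
  shows "(negseq A, negseq A, C, D) \<in> NS n \<and> NS_equiv n (A,A,C,D) (negseq A, negseq A, C, D)"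
  using assms by (intro step_gen) (auto simp: NS_iff bin_neg len_ops NACF_neg elem_step_def)

lemma step_revA: assumes "(A,A,C,D) \<in> NS n"
  shows "(revseq A, revseq A, C, D) \<in> NS n \<and> NS_equiv n (A,A,C,D) (revseq A, revseq A, C, D)"
  using assms by (intro step_gen) (auto simp: NS_iff bin_rev len_ops NACF_rev elem_step_def)

lemma step_negC: assumes "(A,A,C,D) \<in> NS n"
  shows "(A, A, negseq C, D) \<in> NS n \<and> NS_equiv n (A,A,C,D) (A, A, negseq C, D)"
  using assms by (intro step_gen) (auto simp: NS_iff bin_neg len_ops NACF_neg elem_step_def)

lemma step_negD: assumes "(A,A,C,D) \<in> NS n"
  shows "(A, A, C, negseq D) \<in> NS n \<and> NS_equiv n (A,A,C,D) (A, A, C, negseq D)"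
  using assms by (intro step_gen) (auto simp: NS_iff bin_neg len_ops NACF_neg elem_step_def)

lemma step_revC: assumes "(A,A,C,D) \<in> NS n"
  shows "(A, A, revseq C, D) \<in> NS n \<and> NS_equiv n (A,A,C,D) (A, A, revseq C, D)"
  using assms by (intro step_gen) (auto simp: NS_iff bin_rev len_ops NACF_rev elem_step_def)

lemma step_revD: assumes "(A,A,C,D) \<in> NS n"
  shows "(A, A, C, revseq D) \<in> NS n \<and> NS_equiv n (A,A,C,D) (A, A, C, revseq D)"
  using assms by (intro step_gen) (auto simp: NS_iff bin_rev len_ops NACF_rev elem_step_def)

lemma step_sw: assumes "(A,A,C,D) \<in> NS n"
  shows "(A, A, D, C) \<in> NS n \<and> NS_equiv n (A,A,C,D) (A, A, D, C)"
  using assms by (intro step_gen) (auto simp: NS_iff elem_step_def add.commute add.left_commute)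

lemma step_E4: assumes S: "(A,A,C,D) \<in> NS n"
  shows "(A, A, fst (swap45 C D), snd (swap45 C D)) \<in> NS n \<and>
     NS_equiv n (A,A,C,D) (A, A, fst (swap45 C D), snd (swap45 C D))"
proof (intro step_gen[OF S])
  obtain C' D' where sw: "swap45 C D = (C', D')" by (cases "swap45 C D") auto
  have "\<forall>i. NACF C' i + NACF D' i = NACF C i + NACF D i" using E4_NACF[OF S] sw by (metis fst_conv snd_conv)
  moreover have "binary_seq C' \<and> binary_seq D'" "length C' = length C" "length D' = length D"
    using S bin_swap45[of C D] swap45_len[of C D] sw by (auto simp: NS_iff)
  ultimately show "(A, A, fst (swap45 C D), snd (swap45 C D)) \<in> NS n"
    using S unfolding sw by (auto simp: NS_iff add.assoc)
qed (auto simp: elem_step_def)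

lemma step_alt: assumes S: "(A,A,C,D) \<in> NS n"
  shows "(altseq A, altseq A, altseq C, altseq D) \<in> NS n \<and>
     NS_equiv n (A,A,C,D) (altseq A, altseq A, altseq C, altseq D)"
proof (intro step_gen[OF S])
  have "2 * NACF (altseq A) i + NACF (altseq C) i + NACF (altseq D) i =
     (if even i then 1 else -1) * (2 * NACF A i + NACF C i + NACF D i)" for i
    by (simp add: NACF_alt algebra_simps)
  then show "(altseq A, altseq A, altseq C, altseq D) \<in> NS n"
    using S by (auto simp: NS_iff bin_alt len_ops)
qed (auto simp: elem_step_def)


definition nCl :: "nat \<Rightarrow> nat" where
  "nCl l = (if l = 1 then 7 else if l = 7 then 1 else if l = 2 then 8 else if l = 8 then 2
     else if l = 3 then 4 else if l = 4 then 3 else if l = 5 then 6 else if l = 6 then 5 else l)"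
definition nDl :: "nat \<Rightarrow> nat" where
  "nDl l = (if l = 1 then 2 else if l = 2 then 1 else if l = 7 then 8 else if l = 8 then 7
     else if l = 3 then 5 else if l = 5 then 3 else if l = 4 then 6 else if l = 6 then 4 else l)"
definition rCl :: "nat \<Rightarrow> nat" where
  "rCl l = (if l = 3 then 4 else if l = 4 then 3 else if l = 5 then 6 else if l = 6 then 5 else l)"
definition rDl :: "nat \<Rightarrow> nat" where
  "rDl l = (if l = 3 then 5 else if l = 5 then 3 else if l = 4 then 6 else if l = 6 then 4 else l)"
definition swl :: "nat \<Rightarrow> nat" where
  "swl l = (if l = 2 then 7 else if l = 7 then 2 else if l = 4 then 5 else if l = 5 then 4 else l)"
definition e4l :: "nat \<Rightarrow> nat" where
  "e4l l = (if l = 4 then 5 else if l = 5 then 4 else l)"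
definition nAl :: "nat \<Rightarrow> nat" where
  "nAl l = (if l = 1 then 8 else if l = 8 then 1 else if l = 3 then 6 else if l = 6 then 3
     else if l = 2 then 7 else if l = 7 then 2 else if l = 4 then 5 else if l = 5 then 4 else l)"
definition rAl :: "nat \<Rightarrow> nat" where
  "rAl l = (if l = 3 then 6 else if l = 6 then 3 else if l = 4 then 5 else if l = 5 then 4 else l)"
definition alt1l :: "nat \<Rightarrow> nat" where
  "alt1l l = (if l = 1 then 6 else if l = 6 then 1 else if l = 3 then 8 else if l = 8 then 3
     else if l = 2 then 4 else if l = 4 then 2 else if l = 5 then 7 else if l = 7 then 5 else l)"

definition cnC :: "nat \<Rightarrow> nat" where
  "cnC c = (if c = 0 then 2 else if c = 2 then 0 else if c = 1 then 3 else if c = 3 then 1 else c)"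
definition cnD :: "nat \<Rightarrow> nat" where
  "cnD c = (if c = 0 then 1 else if c = 1 then 0 else if c = 2 then 3 else if c = 3 then 2 else c)"
definition csw :: "nat \<Rightarrow> nat" where
  "csw c = (if c = 1 then 2 else if c = 2 then 1 else c)"
definition cnA :: "nat \<Rightarrow> nat" where
  "cnA c = (if c = 0 then 3 else if c = 3 then 0 else if c = 1 then 2 else if c = 2 then 1 else c)"

lemma pm_cases: "(a::int) \<in> {1,-1} \<Longrightarrow> (a = 1 \<Longrightarrow> P) \<Longrightarrow> (a = -1 \<Longrightarrow> P) \<Longrightarrow> P"
  by auto

lemmas pdefs = qlabel_def nCl_def nDl_def rCl_def rDl_def swl_def e4l_def nAl_def rAl_def alt1l_def
  clabel_def cnC_def cnD_def csw_def cnA_def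

lemma ql_nC: "a \<in> {1,-1} \<Longrightarrow> b \<in> {1,-1} \<Longrightarrow> c \<in> {1,-1} \<Longrightarrow> d \<in> {1,-1} \<Longrightarrow>
  qlabel (-a) (-b) c d = nCl (qlabel a b c d)"
  by (elim pm_cases; simp add: pdefs)
lemma ql_nD: "a \<in> {1,-1} \<Longrightarrow> b \<in> {1,-1} \<Longrightarrow> c \<in> {1,-1} \<Longrightarrow> d \<in> {1,-1} \<Longrightarrow>
  qlabel a b (-c) (-d) = nDl (qlabel a b c d)"
  by (elim pm_cases; simp add: pdefs)
lemma ql_rC: "a \<in> {1,-1} \<Longrightarrow> b \<in> {1,-1} \<Longrightarrow> c \<in> {1,-1} \<Longrightarrow> d \<in> {1,-1} \<Longrightarrow>
  qlabel b a c d = rCl (qlabel a b c d)"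
  by (elim pm_cases; simp add: pdefs)
lemma ql_rD: "a \<in> {1,-1} \<Longrightarrow> b \<in> {1,-1} \<Longrightarrow> c \<in> {1,-1} \<Longrightarrow> d \<in> {1,-1} \<Longrightarrow>
  qlabel a b d c = rDl (qlabel a b c d)"
  by (elim pm_cases; simp add: pdefs)
lemma ql_sw: "a \<in> {1,-1} \<Longrightarrow> b \<in> {1,-1} \<Longrightarrow> c \<in> {1,-1} \<Longrightarrow> d \<in> {1,-1} \<Longrightarrow>
  qlabel c d a b = swl (qlabel a b c d)"
  by (elim pm_cases; simp add: pdefs)
lemma ql_e4: "a \<in> {1,-1} \<Longrightarrow> b \<in> {1,-1} \<Longrightarrow> c \<in> {1,-1} \<Longrightarrow> d \<in> {1,-1} \<Longrightarrow>
  qlabel (if qlabel a b c d \<in> {4,5} then -a else a) (if qlabel a b c d \<in> {4,5} then -b else b)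
         (if qlabel a b c d \<in> {4,5} then -c else c) (if qlabel a b c d \<in> {4,5} then -d else d) = e4l (qlabel a b c d)"
  by (elim pm_cases; simp add: pdefs)
lemma ql_nA: "a \<in> {1,-1} \<Longrightarrow> b \<in> {1,-1} \<Longrightarrow> qlabel (-a) (-b) (-a) (-b) = nAl (qlabel a b a b)"
  by (elim pm_cases; simp add: pdefs)
lemma ql_rA: "a \<in> {1,-1} \<Longrightarrow> b \<in> {1,-1} \<Longrightarrow> qlabel b a b a = rAl (qlabel a b a b)"
  by (elim pm_cases; simp add: pdefs)
lemma ql_alt1: "a \<in> {1,-1} \<Longrightarrow> b \<in> {1,-1} \<Longrightarrow> qlabel a (-b) a (-b) = alt1l (qlabel a b a b)"
  by (elim pm_cases; simp add: pdefs)
lemma ql_A_range: "a \<in> {1,-1} \<Longrightarrow> b \<in> {1,-1} \<Longrightarrow> qlabel a b a b \<in> {1,3,6,8}"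
  by (elim pm_cases; simp add: pdefs)

lemma cl_nC: "a \<in> {1,-1} \<Longrightarrow> c \<in> {1,-1} \<Longrightarrow> clabel (-a) c = cnC (clabel a c)"
  by (elim pm_cases; simp add: pdefs)
lemma cl_nD: "a \<in> {1,-1} \<Longrightarrow> c \<in> {1,-1} \<Longrightarrow> clabel a (-c) = cnD (clabel a c)"
  by (elim pm_cases; simp add: pdefs)
lemma cl_sw: "a \<in> {1,-1} \<Longrightarrow> c \<in> {1,-1} \<Longrightarrow> clabel c a = csw (clabel a c)"
  by (elim pm_cases; simp add: pdefs)
lemma cl_nA: "a \<in> {1,-1} \<Longrightarrow> clabel (-a) (-a) = cnA (clabel a a)"
  by (elim pm_cases; simp add: pdefs)
lemma cl_A_range: "a \<in> {1,-1} \<Longrightarrow> clabel a a \<in> {0,3}"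
  by (elim pm_cases; simp add: pdefs)


lemma bin_mem: "binary_seq X \<Longrightarrow> k < length X \<Longrightarrow> X ! k \<in> {1,-1}"
  using bin_nth by auto

lemma idx: "1 \<le> i \<Longrightarrow> i \<le> (n::nat) div 2 \<Longrightarrow> i - 1 < n \<and> n - i < n"
  by auto

lemma rev_idx: "1 \<le> i \<Longrightarrow> i \<le> length X div 2 \<Longrightarrow>
   revseq X ! (i - 1) = X ! (length X - i) \<and> revseq X ! (length X - i) = X ! (i - 1)"
  by (auto simp: revseq_def rev_nth Suc_diff_le)

context
  fixes C D :: "int list" and i :: nat
  assumes bC: "binary_seq C" and bD: "binary_seq D" and l: "length D = length C"
    and i: "1 \<le> i" "i \<le> length C div 2"
begin

private lemma mems: "C ! (i - 1) \<in> {1,-1}" "C ! (length C - i) \<in> {1,-1}"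
   "D ! (i - 1) \<in> {1,-1}" "D ! (length C - i) \<in> {1,-1}"
  using bin_mem[OF bC] bin_mem[OF bD] idx[OF i] l by auto

lemma quad_negC: "quad (negseq C) D i = nCl (quad C D i)"
  using ql_nC[OF mems] idx[OF i] by (simp add: Let_def quad_def negseq_def)
lemma quad_negD: "quad C (negseq D) i = nDl (quad C D i)"
  using ql_nD[OF mems] idx[OF i] l by (simp add: Let_def quad_def negseq_def)
lemma quad_revC: "quad (revseq C) D i = rCl (quad C D i)"
  using ql_rC[OF mems] rev_idx[OF i] by (simp add: Let_def quad_def len_ops)
lemma quad_revD: "quad C (revseq D) i = rDl (quad C D i)"
  using ql_rD[OF mems] rev_idx[of i D] i l by (simp add: Let_def quad_def)
lemma quad_sw: "quad D C i = swl (quad C D i)"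
  using ql_sw[OF mems] l by (simp add: Let_def quad_def)
lemma quad_e4: "quad (fst (swap45 C D)) (snd (swap45 C D)) i = e4l (quad C D i)"
proof -
  have h: "i \<le> Suc (length C) - i" "\<not> Suc (length C - i) \<le> i" using i by presburger+
  have f1: "flip45 C D (i - 1) = (quad C D i \<in> {4,5})"
    using i h by (simp add: flip45_def Let_def min_def)
  have f2: "flip45 C D (length C - i) = (quad C D i \<in> {4,5})"
    using i h by (simp add: flip45_def Let_def min_def)
  define F where "F = (quad C D i \<in> {4,5})"
  have q: "quad C D i = qlabel (C ! (i - 1)) (C ! (length C - i)) (D ! (i - 1)) (D ! (length C - i))"
    by (simp add: quad_def Let_def)
  have "quad (fst (swap45 C D)) (snd (swap45 C D)) i =
    qlabel (if F then - C ! (i - 1) else C ! (i - 1)) (if F then - C ! (length C - i) else C ! (length C - i))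
       (if F then - D ! (i - 1) else D ! (i - 1)) (if F then - D ! (length C - i) else D ! (length C - i))"
    unfolding quad_def[of "fst _"] using idx[OF i] l f1 f2 unfolding F_def[symmetric]
    by (simp add: swap45_def Let_def)
  also have "\<dots> = e4l (quad C D i)"
    unfolding F_def q by (rule ql_e4[OF mems])
  finally show ?thesis .
qed

end

context
  fixes A :: "int list" and i :: nat
  assumes bA: "binary_seq A" and i: "1 \<le> i" "i \<le> length A div 2"
begin

private lemma memsA: "A ! (i - 1) \<in> {1,-1}" "A ! (length A - i) \<in> {1,-1}"
  using bin_mem[OF bA] idx[OF i] by auto

lemma quad_negA: "quad (negseq A) (negseq A) i = nAl (quad A A i)"
  using ql_nA[OF memsA] idx[OF i] by (simp add: Let_def quad_def negseq_def)
lemma quad_revA: "quad (revseq A) (revseq A) i = rAl (quad A A i)"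
  using ql_rA[OF memsA] rev_idx[OF i] by (simp add: Let_def quad_def len_ops)
lemma quad_A_range: "quad A A i \<in> {1,3,6,8}"
  using ql_A_range[OF memsA] by (simp add: Let_def quad_def)
lemma quad_altA_odd: "odd (length A) \<Longrightarrow> quad (altseq A) (altseq A) i = (if even i then nAl (quad A A i) else quad A A i)"
proof -
  assume o: "odd (length A)"
  have p1: "(-1::int) ^ (i - 1) = (if even i then -1 else 1)" using i by (cases i) auto
  have p2: "(-1::int) ^ (length A - i) = (if even i then -1 else 1)"
  proof -
    have "even (length A - i) = odd i" using o i by auto
    then show ?thesis by (cases "even i") auto
  qed
  show ?thesis using ql_nA[OF memsA] idx[OF i] p1 p2 by (simp add: Let_def quad_def altseq_def len_ops)
qed
lemma quad_altA_even1: "even (length A) \<Longrightarrow> i = 1 \<Longrightarrow> quad (altseq A) (altseq A) i = alt1l (quad A A i)"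
proof -
  assume e: "even (length A)" and i1: "i = 1"
  have p2: "(-1::int) ^ (length A - 1) = -1" using e i by auto
  show ?thesis using ql_alt1[OF memsA] idx[OF i] p2 i1 by (simp add: Let_def quad_def altseq_def len_ops)
qed

end


lemma odd_mid: "odd (length X) \<Longrightarrow> length X div 2 < length X \<and> length X - Suc (length X div 2) = length X div 2"
  by presburger

context
  fixes C D :: "int list"
  assumes bC: "binary_seq C" and bD: "binary_seq D" and l: "length D = length C" and o: "odd (length C)"
begin

private lemma cmems: "C ! (length C div 2) \<in> {1,-1}" "D ! (length C div 2) \<in> {1,-1}"
  using bin_mem[OF bC] bin_mem[OF bD] odd_mid[OF o] l by auto

lemma central_negC: "central (negseq C) D = cnC (central C D)"
  using cl_nC[OF cmems] odd_mid[OF o] by (simp add: central_def Let_def negseq_def)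
lemma central_negD: "central C (negseq D) = cnD (central C D)"
  using cl_nD[OF cmems] odd_mid[OF o] l by (simp add: central_def Let_def negseq_def)
lemma central_revC: "central (revseq C) D = central C D"
  using odd_mid[OF o] by (simp add: central_def Let_def revseq_def rev_nth)
lemma central_revD: "central C (revseq D) = central C D"
  using odd_mid[OF o] l by (simp add: central_def Let_def revseq_def rev_nth)
lemma central_sw: "central D C = csw (central C D)"
  using cl_sw[OF cmems] l by (simp add: central_def Let_def)
lemma central_e4: "central (fst (swap45 C D)) (snd (swap45 C D)) = central C D"
proof -
  have h: "Suc (length C div 2) \<le> length C - length C div 2" using o by presburger
  have "\<not> flip45 C D (length C div 2)" using o h by (simp add: flip45_def Let_def min_def)
  then show ?thesis using odd_mid[OF o] l by (simp add: central_def Let_def swap45_def)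
qed

end

context
  fixes A :: "int list"
  assumes bA: "binary_seq A" and o: "odd (length A)"
begin

private lemma cmemA: "A ! (length A div 2) \<in> {1,-1}"
  using bin_mem[OF bA] odd_mid[OF o] by auto

lemma central_negA: "central (negseq A) (negseq A) = cnA (central A A)"
  using cl_nA[OF cmemA] odd_mid[OF o] by (simp add: central_def Let_def negseq_def)
lemma central_revA: "central (revseq A) (revseq A) = central A A"
  using odd_mid[OF o] by (simp add: central_def Let_def revseq_def rev_nth)
lemma central_A_range: "central A A \<in> {0,3}"
  using cl_A_range[OF cmemA] by (simp add: central_def Let_def)
lemma central_altA: "central (altseq A) (altseq A) = (if odd (length A div 2) then cnA (central A A) else central A A)"
  using cl_nA[OF cmemA] odd_mid[OF o] by (simp add: central_def Let_def altseq_def len_ops)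

end

definition firstc :: "nat \<Rightarrow> (nat \<Rightarrow> bool) \<Rightarrow> nat \<Rightarrow> (nat \<Rightarrow> nat) \<Rightarrow> bool" where
  "firstc m P v q \<longleftrightarrow> (\<forall>i\<in>{1..m}. P (q i) \<and> (\<forall>j\<in>{1..<i}. \<not> P (q j)) \<longrightarrow> q i = v)"

definition firstP :: "nat \<Rightarrow> (nat \<Rightarrow> bool) \<Rightarrow> (nat \<Rightarrow> nat) \<Rightarrow> nat \<Rightarrow> bool" where
  "firstP m P q i \<longleftrightarrow> i \<in> {1..m} \<and> P (q i) \<and> (\<forall>j\<in>{1..<i}. \<not> P (q j))"

lemma first_ex: "\<exists>i\<in>{1..m}. P (q i) \<Longrightarrow> \<exists>i. firstP m P q i"
proof -
  assume "\<exists>i\<in>{1..m}. P (q i)"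
  then obtain i where i: "i \<in> {1..m}" "P (q i)" by blast
  define i0 where "i0 = (LEAST i. i \<in> {1..m} \<and> P (q i))"
  have "i0 \<in> {1..m} \<and> P (q i0)" unfolding i0_def by (rule LeastI[of _ i]) (use i in auto)
  moreover have "\<forall>j\<in>{1..<i0}. \<not> P (q j)"
  proof (intro ballI notI)
    fix j assume j: "j \<in> {1..<i0}" "P (q j)"
    have jm: "j \<in> {1..m} \<and> P (q j)" using j \<open>i0 \<in> {1..m} \<and> P (q i0)\<close> by auto
    have "i0 \<le> j" unfolding i0_def by (rule Least_le) (rule jm)
    then show False using j by auto
  qed
  ultimately show ?thesis unfolding firstP_def by blast
qed

lemma first_cases: "(\<forall>i\<in>{1..m}. \<not> P (q i)) \<or> (\<exists>i. firstP m P q i)"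
  using first_ex by blast

lemma first_uniq: "firstP m P q i \<Longrightarrow> firstP m P q j \<Longrightarrow> i = j"
proof -
  assume a: "firstP m P q i" "firstP m P q j"
  show "i = j"
  proof (rule linorder_cases[of i j])
    assume "i < j" then show ?thesis using a unfolding firstP_def by auto
  next
    assume "j < i" then show ?thesis using a unfolding firstP_def by auto
  qed
qed

lemma firstc_iff: "firstc m P v q \<longleftrightarrow> (\<forall>i. firstP m P q i \<longrightarrow> q i = v)"
  unfolding firstc_def firstP_def by blast

lemma firstP_cong: "(\<And>x. P (f x) = P x) \<Longrightarrow> (\<forall>i\<in>{1..m}. q' i = f (q i)) \<Longrightarrow> firstP m P q' i = firstP m P q i"
  unfolding firstP_def by (metis (no_types, lifting) atLeastAtMost_iff atLeastLessThan_iff less_imp_le_nat order_trans)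

lemma firstc_pres:
  assumes "\<And>x. P (f x) = P x" "f v = v" "\<forall>i\<in>{1..m}. q' i = f (q i)" "firstc m P v q"
  shows "firstc m P v q'"
  unfolding firstc_iff
proof (intro allI impI)
  fix i assume a: "firstP m P q' i"
  then have "firstP m P q i" using firstP_cong[of P f m q' q i] assms(1,3) by blast
  then have "q i = v" using assms(4) unfolding firstc_iff by blast
  moreover have "i \<in> {1..m}" using a unfolding firstP_def by blast
  ultimately show "q' i = v" using assms(2,3) by auto
qed

lemma firstc_est:
  assumes "\<And>x. P (f x) = P x" "\<forall>i\<in>{1..m}. q' i = f (q i)" "\<And>i. firstP m P q i \<Longrightarrow> f (q i) = v"
  shows "firstc m P v q'"
  unfolding firstc_iff
proof (intro allI impI)
  fix i assume a: "firstP m P q' i"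
  then have "firstP m P q i" using firstP_cong[of P f m q' q i] assms(1,2) by blast
  then have "f (q i) = v" using assms(3) by blast
  moreover have "i \<in> {1..m}" using a unfolding firstP_def by blast
  ultimately show "q' i = v" using assms(2) by auto
qed

lemma firstc_none: "(\<forall>i\<in>{1..m}. \<not> P (q i)) \<Longrightarrow> firstc m P v q"
  unfolding firstc_def by auto


definition RCD :: "nat \<Rightarrow> int list \<Rightarrow> int list \<Rightarrow> int list \<Rightarrow> int list \<Rightarrow> int list \<Rightarrow> (nat \<Rightarrow> nat) \<Rightarrow> (nat \<Rightarrow> nat) \<Rightarrow> bool" where
  "RCD n A C D C' D' f fc \<longleftrightarrow> (A,A,C',D') \<in> NS n \<and> NS_equiv n (A,A,C,D) (A,A,C',D') \<and>
     (\<forall>i\<in>{1..n div 2}. quad C' D' i = f (quad C D i)) \<and> (odd n \<longrightarrow> central C' D' = fc (central C D))"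

lemma RCD_refl: "(A,A,C,D) \<in> NS n \<Longrightarrow> RCD n A C D C D id id"
  by (simp add: RCD_def equiv_refl)

lemma RCD_trans: "RCD n A C D C1 D1 f fc \<Longrightarrow> RCD n A C1 D1 C2 D2 g gc \<Longrightarrow> RCD n A C D C2 D2 (g \<circ> f) (gc \<circ> fc)"
  unfolding RCD_def using equiv_trans by auto

context
  fixes n A C D
  assumes S: "(A,A,C,D) \<in> NS n"
begin

private lemma facts: "binary_seq C" "binary_seq D" "length C = n" "length D = n"
  using S by (auto simp: NS_iff)

lemma RCD_negC: "RCD n A C D (negseq C) D nCl cnC"
  unfolding RCD_def using step_negC[OF S] quad_negC[OF facts(1,2)] central_negC[OF facts(1,2)] facts
  by auto
lemma RCD_negD: "RCD n A C D C (negseq D) nDl cnD"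
  unfolding RCD_def using step_negD[OF S] quad_negD[OF facts(1,2)] central_negD[OF facts(1,2)] facts
  by auto
lemma RCD_revC: "RCD n A C D (revseq C) D rCl id"
  unfolding RCD_def using step_revC[OF S] quad_revC[OF facts(1,2)] central_revC[OF facts(1,2)] facts
  by auto
lemma RCD_revD: "RCD n A C D C (revseq D) rDl id"
  unfolding RCD_def using step_revD[OF S] quad_revD[OF facts(1,2)] central_revD[OF facts(1,2)] facts
  by auto
lemma RCD_sw: "RCD n A C D D C swl csw"
  unfolding RCD_def using step_sw[OF S] quad_sw[OF facts(1,2)] central_sw[OF facts(1,2)] facts
  by auto
lemma RCD_e4: "RCD n A C D (fst (swap45 C D)) (snd (swap45 C D)) e4l id"
  unfolding RCD_def using step_E4[OF S] quad_e4[OF facts(1,2)] central_e4[OF facts(1,2)] facts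
  by auto

end

lemma RCD_NS: "RCD n A C D C' D' f fc \<Longrightarrow> (A,A,C',D') \<in> NS n"
  by (simp add: RCD_def)

lemma RCD_sfC: "(A,A,C,D) \<in> NS n \<Longrightarrow> \<exists>C' D'. RCD n A C D C' D' (rCl \<circ> nCl) (id \<circ> cnC)"
  using RCD_trans[OF RCD_negC RCD_revC[OF RCD_NS[OF RCD_negC]]] by blast
lemma RCD_sfD: "(A,A,C,D) \<in> NS n \<Longrightarrow> \<exists>C' D'. RCD n A C D C' D' (rDl \<circ> nDl) (id \<circ> cnD)"
  using RCD_trans[OF RCD_negD RCD_revD[OF RCD_NS[OF RCD_negD]]] by blast

lemma RCD_est: "RCD n A C D C' D' f fc \<Longrightarrow> (\<And>x. P (f x) = P x) \<Longrightarrow> firstP (n div 2) P (quad C D) i0 \<Longrightarrow>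
   f (quad C D i0) = v \<Longrightarrow> firstc (n div 2) P v (quad C' D')"
proof -
  assume a: "RCD n A C D C' D' f fc" "\<And>x. P (f x) = P x" "firstP (n div 2) P (quad C D) i0"
     "f (quad C D i0) = v"
  show ?thesis
  proof (rule firstc_est[of P f])
    show "\<forall>i\<in>{1..n div 2}. quad C' D' i = f (quad C D i)" using a(1) by (simp add: RCD_def)
    fix i assume "firstP (n div 2) P (quad C D) i"
    then have "i = i0" using a(3) first_uniq by blast
    then show "f (quad C D i) = v" using a(4) by simp
  qed (rule a(2))
qed

lemma RCD_pres: "RCD n A C D C' D' f fc \<Longrightarrow> (\<And>x. P (f x) = P x) \<Longrightarrow> f v = v \<Longrightarrow>
   firstc (n div 2) P v (quad C D) \<Longrightarrow> firstc (n div 2) P v (quad C' D')"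
  by (rule firstc_pres[of P f]) (auto simp: RCD_def)

lemma RCD_none: "RCD n A C D C' D' f fc \<Longrightarrow> (\<And>x. P (f x) = P x) \<Longrightarrow>
   (\<forall>i\<in>{1..n div 2}. \<not> P (quad C' D' i)) = (\<forall>i\<in>{1..n div 2}. \<not> P (quad C D i))"
  by (auto simp: RCD_def)


lemmas ldefs = nCl_def nDl_def rCl_def rDl_def swl_def e4l_def nAl_def rAl_def alt1l_def
  cnC_def cnD_def csw_def cnA_def symq_def skewq_def

lemma sym_sfC: "symq ((rCl \<circ> nCl) x) = symq x" by (simp add: ldefs)
lemma sym_sfD: "symq ((rDl \<circ> nDl) x) = symq x" by (simp add: ldefs)
lemma sym_sfCD: "symq ((rDl \<circ> nDl) ((rCl \<circ> nCl) x)) = symq x" by (simp add: ldefs)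
lemma sym_rC: "symq (rCl x) = symq x" by (simp add: ldefs)
lemma sym_rD: "symq (rDl x) = symq x" by (simp add: ldefs)
lemma sym_rCD: "symq (rDl (rCl x)) = symq x" by (simp add: ldefs)
lemma skew_rC: "skewq (rCl x) = skewq x" by (simp add: ldefs)
lemma skew_rD: "skewq (rDl x) = skewq x" by (simp add: ldefs)
lemma skew_rCD: "skewq (rDl (rCl x)) = skewq x" by (simp add: ldefs)
lemma sym_sw: "symq (swl x) = symq x" by (simp add: ldefs)
lemma skew_sw: "skewq (swl x) = skewq x" by (simp add: ldefs)
lemma p27_sw: "(swl x \<in> {2,7}) = (x \<in> {2,7})" by (simp add: ldefs)
lemma sym_e4: "symq (e4l x) = symq x" by (simp add: ldefs)
lemma skew_e4: "skewq (e4l x) = skewq x" by (simp add: ldefs)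
lemma p27_e4: "(e4l x \<in> {2,7}) = (x \<in> {2,7})" by (simp add: ldefs)
lemma p45_e4: "(e4l x \<in> {4,5}) = (x \<in> {4,5})" by (simp add: ldefs)
lemma sfC_nonsym: "\<not> symq x \<Longrightarrow> (rCl \<circ> nCl) x = x" by (simp add: ldefs)
lemma sfD_nonsym: "\<not> symq x \<Longrightarrow> (rDl \<circ> nDl) x = x" by (simp add: ldefs)


lemma RCD_E: "RCD n A C D C' D' f fc \<Longrightarrow> (A,A,C',D') \<in> NS n \<and> NS_equiv n (A,A,C,D) (A,A,C',D')"
  by (simp add: RCD_def)

lemma RCD_sfCD: "(A,A,C,D) \<in> NS n \<Longrightarrow> \<exists>C' D'. RCD n A C D C' D' ((rDl \<circ> nDl) \<circ> (rCl \<circ> nCl)) ((id \<circ> cnD) \<circ> (id \<circ> cnC))"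
proof -
  assume S: "(A,A,C,D) \<in> NS n"
  obtain C1 D1 where 1: "RCD n A C D C1 D1 (rCl \<circ> nCl) (id \<circ> cnC)" using RCD_sfC[OF S] by blast
  obtain C2 D2 where 2: "RCD n A C1 D1 C2 D2 (rDl \<circ> nDl) (id \<circ> cnD)" using RCD_sfD[OF RCD_NS[OF 1]] by blast
  show ?thesis using RCD_trans[OF 1 2] by blast
qed

lemma RCD_rCD: "(A,A,C,D) \<in> NS n \<Longrightarrow> \<exists>C' D'. RCD n A C D C' D' (rDl \<circ> rCl) (id \<circ> id)"
  using RCD_trans[OF RCD_revC RCD_revD[OF RCD_NS[OF RCD_revC]]] by blast

lemma stage1:
  assumes S: "(A,A,C,D) \<in> NS n"
  shows "\<exists>C' D'. (A,A,C',D') \<in> NS n \<and> NS_equiv n (A,A,C,D) (A,A,C',D') \<and>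
     firstc (n div 2) symq 1 (quad C' D')"
proof (cases "\<forall>i\<in>{1..n div 2}. \<not> symq (quad C D i)")
  case True
  then show ?thesis using S firstc_none[of "n div 2" symq "quad C D" 1, OF True] equiv_refl by blast
next
  case False
  then obtain i0 where i0: "firstP (n div 2) symq (quad C D) i0" using first_cases by blast
  then have "quad C D i0 \<in> {1,2,7,8}" by (simp add: firstP_def symq_def)
  then consider "quad C D i0 = 1" | "quad C D i0 = 2" | "quad C D i0 = 7" | "quad C D i0 = 8" by blast
  then show ?thesis
  proof cases
    case 1
    have "firstc (n div 2) symq 1 (quad C D)" using RCD_est[OF RCD_refl[OF S], of symq i0 1] i0 1 by simp
    then show ?thesis using S equiv_refl by blast
  next
    case 2
    obtain C' D' where R: "RCD n A C D C' D' (rDl \<circ> nDl) (id \<circ> cnD)" using RCD_sfD[OF S] by blast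
    have "firstc (n div 2) symq 1 (quad C' D')" using RCD_est[OF R, of symq i0 1] i0 2 sym_sfD by (simp add: ldefs)
    then show ?thesis using RCD_E[OF R] by blast
  next
    case 3
    obtain C' D' where R: "RCD n A C D C' D' (rCl \<circ> nCl) (id \<circ> cnC)" using RCD_sfC[OF S] by blast
    have "firstc (n div 2) symq 1 (quad C' D')" using RCD_est[OF R, of symq i0 1] i0 3 sym_sfC by (simp add: ldefs)
    then show ?thesis using RCD_E[OF R] by blast
  next
    case 4
    obtain C' D' where R: "RCD n A C D C' D' ((rDl \<circ> nDl) \<circ> (rCl \<circ> nCl)) ((id \<circ> cnD) \<circ> (id \<circ> cnC))"
      using RCD_sfCD[OF S] by blast
    have "firstc (n div 2) symq 1 (quad C' D')" using RCD_est[OF R, of symq i0 1] i0 4 sym_sfCD by (simp add: ldefs)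
    then show ?thesis using RCD_E[OF R] by blast
  qed
qed

lemma stage2:
  assumes S: "(A,A,C,D) \<in> NS n" and f1: "firstc (n div 2) symq 1 (quad C D)"
  shows "\<exists>C' D'. (A,A,C',D') \<in> NS n \<and> NS_equiv n (A,A,C,D) (A,A,C',D') \<and>
     firstc (n div 2) symq 1 (quad C' D') \<and> firstc (n div 2) skewq 6 (quad C' D')"
proof (cases "\<forall>i\<in>{1..n div 2}. \<not> skewq (quad C D i)")
  case True
  then show ?thesis using S f1 firstc_none[of "n div 2" skewq "quad C D" 6, OF True] equiv_refl by blast
next
  case False
  then obtain i0 where i0: "firstP (n div 2) skewq (quad C D) i0" using first_cases by blast
  then have "quad C D i0 \<in> {3,4,5,6}" by (simp add: firstP_def skewq_def)
  then consider "quad C D i0 = 3" | "quad C D i0 = 4" | "quad C D i0 = 5" | "quad C D i0 = 6" by blast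
  then show ?thesis
  proof cases
    case 4
    have "firstc (n div 2) skewq 6 (quad C D)" using RCD_est[OF RCD_refl[OF S], of skewq i0 6] i0 4 by simp
    then show ?thesis using S f1 equiv_refl by blast
  next
    case 3
    have R: "RCD n A C D (revseq C) D rCl id" using RCD_revC[OF S] .
    have "firstc (n div 2) skewq 6 (quad (revseq C) D)" using RCD_est[OF R, of skewq i0 6] i0 3 skew_rC by (simp add: ldefs)
    moreover have "firstc (n div 2) symq 1 (quad (revseq C) D)" using RCD_pres[OF R, of symq 1] f1 sym_rC by (simp add: ldefs)
    ultimately show ?thesis using RCD_E[OF R] by blast
  next
    case 2
    have R: "RCD n A C D C (revseq D) rDl id" using RCD_revD[OF S] .
    have "firstc (n div 2) skewq 6 (quad C (revseq D))" using RCD_est[OF R, of skewq i0 6] i0 2 skew_rD by (simp add: ldefs)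
    moreover have "firstc (n div 2) symq 1 (quad C (revseq D))" using RCD_pres[OF R, of symq 1] f1 sym_rD by (simp add: ldefs)
    ultimately show ?thesis using RCD_E[OF R] by blast
  next
    case 1
    obtain C' D' where R: "RCD n A C D C' D' (rDl \<circ> rCl) (id \<circ> id)" using RCD_rCD[OF S] by blast
    have "firstc (n div 2) skewq 6 (quad C' D')" using RCD_est[OF R, of skewq i0 6] i0 1 skew_rCD by (simp add: ldefs)
    moreover have "firstc (n div 2) symq 1 (quad C' D')" using RCD_pres[OF R, of symq 1] f1 sym_rCD by (simp add: ldefs)
    ultimately show ?thesis using RCD_E[OF R] by blast
  qed
qed

lemma cl_range: "a \<in> {1,-1} \<Longrightarrow> c \<in> {1,-1} \<Longrightarrow> clabel a c \<in> {0,1,2,3}"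
  by (elim pm_cases; simp add: pdefs)

lemma central_CD_range: "(A,A,C,D) \<in> NS n \<Longrightarrow> odd n \<Longrightarrow> central C D \<in> {0,1,2,3}"
proof -
  assume S: "(A,A,C,D) \<in> NS n" and o: "odd n"
  from S have b: "binary_seq C" "binary_seq D" "length C = n" "length D = n" by (auto simp: NS_iff)
  then have "C ! (n div 2) \<in> {1,-1}" "D ! (n div 2) \<in> {1,-1}" using bin_mem odd_mid[of C] o by auto
  then show ?thesis using cl_range b by (simp add: central_def Let_def)
qed

lemma RCD_same: "RCD n A C D C' D' f fc \<Longrightarrow> (\<forall>i\<in>{1..n div 2}. f (quad C D i) = quad C D i) \<Longrightarrow>
   \<forall>i\<in>{1..n div 2}. quad C' D' i = id (quad C D i)"
  by (simp add: RCD_def)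

lemma stage3:
  assumes S: "(A,A,C,D) \<in> NS n" and f1: "firstc (n div 2) symq 1 (quad C D)" and f2: "firstc (n div 2) skewq 6 (quad C D)"
  shows "\<exists>C' D'. (A,A,C',D') \<in> NS n \<and> NS_equiv n (A,A,C,D) (A,A,C',D') \<and>
     firstc (n div 2) symq 1 (quad C' D') \<and> firstc (n div 2) skewq 6 (quad C' D') \<and>
     (odd n \<and> (\<forall>i\<in>{1..n div 2}. \<not> symq (quad C' D' i)) \<longrightarrow> central C' D' = 0)"
proof (cases "odd n \<and> (\<forall>i\<in>{1..n div 2}. \<not> symq (quad C D i)) \<and> central C D \<noteq> 0")
  case False
  show ?thesis by (rule exI[of _ C], rule exI[of _ D]) (use S f1 f2 equiv_refl False in auto)
next
  case True
  then have o: "odd n" and ns: "\<forall>i\<in>{1..n div 2}. \<not> symq (quad C D i)" and c0: "central C D \<noteq> 0" by auto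
  have "central C D \<in> {1,2,3}" using central_CD_range[OF S o] c0 by auto
  then consider "central C D = 1" | "central C D = 2" | "central C D = 3" by blast
  then show ?thesis
  proof cases
    case 2
    obtain C' D' where R: "RCD n A C D C' D' (rCl \<circ> nCl) (id \<circ> cnC)" using RCD_sfC[OF S] by blast
    have same: "\<forall>i\<in>{1..n div 2}. quad C' D' i = id (quad C D i)" using RCD_same[OF R] ns sfC_nonsym by blast
    have "firstc (n div 2) symq 1 (quad C' D')" by (rule firstc_pres[OF _ _ same f1]) auto
    moreover have "firstc (n div 2) skewq 6 (quad C' D')" by (rule firstc_pres[OF _ _ same f2]) auto
    moreover have "central C' D' = 0" using R o 2 by (simp add: RCD_def ldefs)
    ultimately show ?thesis using RCD_E[OF R] by blast
  next
    case 1
    obtain C' D' where R: "RCD n A C D C' D' (rDl \<circ> nDl) (id \<circ> cnD)" using RCD_sfD[OF S] by blast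
    have same: "\<forall>i\<in>{1..n div 2}. quad C' D' i = id (quad C D i)" using RCD_same[OF R] ns sfD_nonsym by blast
    have "firstc (n div 2) symq 1 (quad C' D')" by (rule firstc_pres[OF _ _ same f1]) auto
    moreover have "firstc (n div 2) skewq 6 (quad C' D')" by (rule firstc_pres[OF _ _ same f2]) auto
    moreover have "central C' D' = 0" using R o 1 by (simp add: RCD_def ldefs)
    ultimately show ?thesis using RCD_E[OF R] by blast
  next
    case 3
    obtain C' D' where R: "RCD n A C D C' D' ((rDl \<circ> nDl) \<circ> (rCl \<circ> nCl)) ((id \<circ> cnD) \<circ> (id \<circ> cnC))"
      using RCD_sfCD[OF S] by blast
    have same: "\<forall>i\<in>{1..n div 2}. quad C' D' i = id (quad C D i)" using RCD_same[OF R] ns sfC_nonsym sfD_nonsym by simp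
    have "firstc (n div 2) symq 1 (quad C' D')" by (rule firstc_pres[OF _ _ same f1]) auto
    moreover have "firstc (n div 2) skewq 6 (quad C' D')" by (rule firstc_pres[OF _ _ same f2]) auto
    moreover have "central C' D' = 0" using R o 3 by (simp add: RCD_def ldefs)
    ultimately show ?thesis using RCD_E[OF R] by blast
  qed
qed

definition P3 :: "nat \<Rightarrow> (nat \<Rightarrow> nat) \<Rightarrow> nat \<Rightarrow> bool" where
  "P3 n q qc \<longleftrightarrow> firstc (n div 2) symq 1 q \<and> firstc (n div 2) skewq 6 q \<and>
     (odd n \<and> (\<forall>i\<in>{1..n div 2}. \<not> symq (q i)) \<longrightarrow> qc = 0)"

definition P4 :: "nat \<Rightarrow> (nat \<Rightarrow> nat) \<Rightarrow> nat \<Rightarrow> bool" where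
  "P4 n q qc \<longleftrightarrow> P3 n q qc \<and> firstc (n div 2) (\<lambda>l. l \<in> {2,7}) 2 q \<and>
     (odd n \<and> (\<forall>i\<in>{1..n div 2}. q i \<notin> {2,7}) \<longrightarrow> qc \<noteq> 2)"

lemma stage4:
  assumes S: "(A,A,C,D) \<in> NS n" and p3: "P3 n (quad C D) (central C D)"
  shows "\<exists>C' D'. (A,A,C',D') \<in> NS n \<and> NS_equiv n (A,A,C,D) (A,A,C',D') \<and> P4 n (quad C' D') (central C' D')"
proof -
  have f1: "firstc (n div 2) symq 1 (quad C D)" and f2: "firstc (n div 2) skewq 6 (quad C D)"
    and c3: "odd n \<and> (\<forall>i\<in>{1..n div 2}. \<not> symq (quad C D i)) \<longrightarrow> central C D = 0"
    using p3 by (auto simp: P3_def)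
  have R: "RCD n A C D D C swl csw" using RCD_sw[OF S] .
  have g1: "firstc (n div 2) symq 1 (quad D C)" using RCD_pres[OF R, of symq 1] f1 sym_sw by (simp add: ldefs)
  have g2: "firstc (n div 2) skewq 6 (quad D C)" using RCD_pres[OF R, of skewq 6] f2 skew_sw by (simp add: ldefs)
  have nsym: "(\<forall>i\<in>{1..n div 2}. \<not> symq (quad D C i)) = (\<forall>i\<in>{1..n div 2}. \<not> symq (quad C D i))"
    using RCD_none[OF R, of symq] sym_sw by blast
  have n27: "(\<forall>i\<in>{1..n div 2}. \<not> (quad D C i \<in> {2,7})) = (\<forall>i\<in>{1..n div 2}. \<not> (quad C D i \<in> {2,7}))"
    using RCD_none[OF R, of "\<lambda>l. l \<in> {2,7}"] p27_sw by blast
  have cen: "odd n \<Longrightarrow> central D C = csw (central C D)" using R by (simp add: RCD_def)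
  show ?thesis
  proof (cases "\<forall>i\<in>{1..n div 2}. \<not> (quad C D i \<in> {2,7})")
    case True
    show ?thesis
    proof (cases "odd n \<and> central C D = 2")
      case False
      have "P4 n (quad C D) (central C D)" unfolding P4_def
        using p3 firstc_none[of "n div 2" "\<lambda>l. l \<in> {2,7}" "quad C D" 2, OF True] False by auto
      then show ?thesis using S equiv_refl by blast
    next
      case c2: True
      have "P4 n (quad D C) (central D C)" unfolding P4_def P3_def
        using g1 g2 c2 cen c3 nsym n27 True firstc_none[of "n div 2" "\<lambda>l. l \<in> {2,7}" "quad D C" 2]
        by (auto simp: ldefs)
      then show ?thesis using RCD_E[OF R] by blast
    qed
  next
    case False
    then obtain i0 where i0: "firstP (n div 2) (\<lambda>l. l \<in> {2,7}) (quad C D) i0"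
      using first_cases[of "n div 2" "\<lambda>l. l \<in> {2,7}" "quad C D"] by auto
    have i0m: "i0 \<in> {1..n div 2}" and v: "quad C D i0 \<in> {2,7}" using i0 unfolding firstP_def by blast+
    have ex27: "\<not> (\<forall>i\<in>{1..n div 2}. quad C D i \<notin> {2,7})" using i0m v by blast
    from v consider "quad C D i0 = 2" | "quad C D i0 = 7" by blast
    then show ?thesis
    proof cases
      case 1
      have "firstc (n div 2) (\<lambda>l. l \<in> {2,7}) 2 (quad C D)"
        using RCD_est[OF RCD_refl[OF S], of "\<lambda>l. l \<in> {2,7}" i0 2] i0 1 by simp
      then have "P4 n (quad C D) (central C D)" unfolding P4_def using p3 ex27 by blast
      then show ?thesis using S equiv_refl by blast
    next
      case 2
      have "firstc (n div 2) (\<lambda>l. l \<in> {2,7}) 2 (quad D C)"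
        using RCD_est[OF R, of "\<lambda>l. l \<in> {2,7}" i0 2] i0 2 p27_sw by (simp add: ldefs)
      moreover have "symq (quad C D i0)" using 2 by (simp add: symq_def)
      then have "\<not> (\<forall>i\<in>{1..n div 2}. \<not> symq (quad C D i))" using i0m by blast
      moreover have "\<not> (\<forall>i\<in>{1..n div 2}. quad D C i \<notin> {2,7})" using n27 ex27 by blast
      ultimately have "P4 n (quad D C) (central D C)" unfolding P4_def P3_def
        using g1 g2 nsym by blast
      then show ?thesis using RCD_E[OF R] by blast
    qed
  qed
qed

definition P5 :: "nat \<Rightarrow> (nat \<Rightarrow> nat) \<Rightarrow> nat \<Rightarrow> bool" where
  "P5 n q qc \<longleftrightarrow> P4 n q qc \<and> firstc (n div 2) (\<lambda>l. l \<in> {4,5}) 4 q"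

lemma stage5:
  assumes S: "(A,A,C,D) \<in> NS n" and p4: "P4 n (quad C D) (central C D)"
  shows "\<exists>C' D'. (A,A,C',D') \<in> NS n \<and> NS_equiv n (A,A,C,D) (A,A,C',D') \<and> P5 n (quad C' D') (central C' D')"
proof (cases "\<forall>i\<in>{1..n div 2}. \<not> (quad C D i \<in> {4,5})")
  case True
  have "P5 n (quad C D) (central C D)" unfolding P5_def
    using p4 firstc_none[of "n div 2" "\<lambda>l. l \<in> {4,5}" "quad C D" 4, OF True] by auto
  then show ?thesis using S equiv_refl by blast
next
  case False
  then obtain i0 where i0: "firstP (n div 2) (\<lambda>l. l \<in> {4,5}) (quad C D) i0"
    using first_cases[of "n div 2" "\<lambda>l. l \<in> {4,5}" "quad C D"] by auto
  then have "quad C D i0 \<in> {4,5}" by (auto simp: firstP_def)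
  then consider "quad C D i0 = 4" | "quad C D i0 = 5" by blast
  then show ?thesis
  proof cases
    case 1
    have "firstc (n div 2) (\<lambda>l. l \<in> {4,5}) 4 (quad C D)"
      using RCD_est[OF RCD_refl[OF S], of "\<lambda>l. l \<in> {4,5}" i0 4] i0 1 by simp
    then have "P5 n (quad C D) (central C D)" unfolding P5_def using p4 by auto
    then show ?thesis using S equiv_refl by blast
  next
    case 2
    have R: "RCD n A C D (fst (swap45 C D)) (snd (swap45 C D)) e4l id" using RCD_e4[OF S] .
    define C' where "C' = fst (swap45 C D)"
    define D' where "D' = snd (swap45 C D)"
    have R': "RCD n A C D C' D' e4l id" using R unfolding C'_def D'_def .
    have f1: "firstc (n div 2) symq 1 (quad C D)" and f2: "firstc (n div 2) skewq 6 (quad C D)"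
      and c3: "odd n \<and> (\<forall>i\<in>{1..n div 2}. \<not> symq (quad C D i)) \<longrightarrow> central C D = 0"
      and f27: "firstc (n div 2) (\<lambda>l. l \<in> {2,7}) 2 (quad C D)"
      and c4: "odd n \<and> (\<forall>i\<in>{1..n div 2}. quad C D i \<notin> {2,7}) \<longrightarrow> central C D \<noteq> 2"
      using p4 by (auto simp: P3_def P4_def)
    have g1: "firstc (n div 2) symq 1 (quad C' D')" using RCD_pres[OF R', of symq 1] f1 sym_e4 by (simp add: ldefs)
    have g2: "firstc (n div 2) skewq 6 (quad C' D')" using RCD_pres[OF R', of skewq 6] f2 skew_e4 by (simp add: ldefs)
    have g27: "firstc (n div 2) (\<lambda>l. l \<in> {2,7}) 2 (quad C' D')"
      using RCD_pres[OF R', of "\<lambda>l. l \<in> {2,7}" 2] f27 p27_e4 by (simp add: ldefs)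
    have g45: "firstc (n div 2) (\<lambda>l. l \<in> {4,5}) 4 (quad C' D')"
      using RCD_est[OF R', of "\<lambda>l. l \<in> {4,5}" i0 4] i0 2 p45_e4 by (simp add: ldefs)
    have nsym: "(\<forall>i\<in>{1..n div 2}. \<not> symq (quad C' D' i)) = (\<forall>i\<in>{1..n div 2}. \<not> symq (quad C D i))"
      using RCD_none[OF R', of symq] sym_e4 by blast
    have n27: "(\<forall>i\<in>{1..n div 2}. \<not> (quad C' D' i \<in> {2,7})) = (\<forall>i\<in>{1..n div 2}. \<not> (quad C D i \<in> {2,7}))"
      using RCD_none[OF R', of "\<lambda>l. l \<in> {2,7}"] p27_e4 by blast
    have cen: "odd n \<Longrightarrow> central C' D' = central C D" using R' by (simp add: RCD_def)
    have "P5 n (quad C' D') (central C' D')" unfolding P5_def P4_def P3_def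
      using g1 g2 g27 g45 nsym n27 cen c3 c4 by auto
    then show ?thesis using RCD_E[OF R'] by blast
  qed
qed

lemma ql_lab: "a \<in> {1,-1} \<Longrightarrow> b \<in> {1,-1} \<Longrightarrow> c \<in> {1,-1} \<Longrightarrow> d \<in> {1,-1} \<Longrightarrow> a * b = c * d \<Longrightarrow>
   symq (qlabel a b c d) \<or> skewq (qlabel a b c d)"
  by (elim pm_cases; simp add: pdefs symq_def skewq_def)

lemma labelled:
  assumes S: "(A,A,C,D) \<in> NS n" and i: "1 \<le> i" "i \<le> n div 2"
  shows "symq (quad C D i) \<or> skewq (quad C D i)"
proof -
  from S have b: "binary_seq C" "binary_seq D" "length C = n" "length D = n" by (auto simp: NS_iff)
  have st: "entry C (int i) * entry C (int n + 1 - int i) = entry D (int i) * entry D (int n + 1 - int i)"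
    using structural[OF S, of "int i"] i by auto
  have "i \<le> n" using i by auto
  then have e: "C ! (i - 1) = entry C (int i)" "D ! (i - 1) = entry D (int i)"
    "C ! (n - i) = entry C (int n + 1 - int i)" "D ! (n - i) = entry D (int n + 1 - int i)"
    using entry_nth[of i C] entry_nth[of i D] entry_nth2[of i C] entry_nth2[of i D] i b by auto
  have m: "C ! (i - 1) \<in> {1,-1}" "C ! (n - i) \<in> {1,-1}" "D ! (i - 1) \<in> {1,-1}" "D ! (n - i) \<in> {1,-1}"
    using bin_mem[OF b(1)] bin_mem[OF b(2)] idx[OF i] b by auto
  show ?thesis using ql_lab[OF m] st e b by (simp add: quad_def Let_def)
qed

definition Ccond :: "nat \<Rightarrow> (nat \<Rightarrow> nat) \<Rightarrow> nat \<Rightarrow> bool" where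
  "Ccond n q qc \<longleftrightarrow> (n > 1 \<longrightarrow> q 1 \<in> {1,6}) \<and> firstc (n div 2) symq 1 q \<and> firstc (n div 2) skewq 6 q \<and>
     firstc (n div 2) (\<lambda>l. l \<in> {2,7}) 2 q \<and> firstc (n div 2) (\<lambda>l. l \<in> {4,5}) 4 q \<and>
     (odd n \<and> (\<forall>i\<in>{1..n div 2}. q i \<noteq> 2) \<longrightarrow> qc \<noteq> 2) \<and>
     (odd n \<and> (\<forall>i\<in>{1..n div 2}. q i \<noteq> 1) \<longrightarrow> qc = 0)"

lemma CD_stage:
  assumes S: "(A,A,C,D) \<in> NS n"
  shows "\<exists>C' D'. (A,A,C',D') \<in> NS n \<and> NS_equiv n (A,A,C,D) (A,A,C',D') \<and> Ccond n (quad C' D') (central C' D')"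
proof -
  obtain C1 D1 where 1: "(A,A,C1,D1) \<in> NS n" "NS_equiv n (A,A,C,D) (A,A,C1,D1)" "firstc (n div 2) symq 1 (quad C1 D1)"
    using stage1[OF S] by blast
  obtain C2 D2 where 2: "(A,A,C2,D2) \<in> NS n" "NS_equiv n (A,A,C1,D1) (A,A,C2,D2)"
    "firstc (n div 2) symq 1 (quad C2 D2)" "firstc (n div 2) skewq 6 (quad C2 D2)"
    using stage2[OF 1(1,3)] by blast
  obtain C3 D3 where 3: "(A,A,C3,D3) \<in> NS n" "NS_equiv n (A,A,C2,D2) (A,A,C3,D3)" "P3 n (quad C3 D3) (central C3 D3)"
    using stage3[OF 2(1,3,4)] unfolding P3_def by blast
  obtain C4 D4 where 4: "(A,A,C4,D4) \<in> NS n" "NS_equiv n (A,A,C3,D3) (A,A,C4,D4)" "P4 n (quad C4 D4) (central C4 D4)"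
    using stage4[OF 3(1,3)] by blast
  obtain C5 D5 where 5: "(A,A,C5,D5) \<in> NS n" "NS_equiv n (A,A,C4,D4) (A,A,C5,D5)" "P5 n (quad C5 D5) (central C5 D5)"
    using stage5[OF 4(1,3)] by blast
  have eq: "NS_equiv n (A,A,C,D) (A,A,C5,D5)" using 1(2) 2(2) 3(2) 4(2) 5(2) equiv_trans by meson
  define q where "q = quad C5 D5"
  define qc where "qc = central C5 D5"
  have f1: "firstc (n div 2) symq 1 q" and f2: "firstc (n div 2) skewq 6 q"
    and c3: "odd n \<and> (\<forall>i\<in>{1..n div 2}. \<not> symq (q i)) \<longrightarrow> qc = 0"
    and f27: "firstc (n div 2) (\<lambda>l. l \<in> {2,7}) 2 q"
    and c4: "odd n \<and> (\<forall>i\<in>{1..n div 2}. q i \<notin> {2,7}) \<longrightarrow> qc \<noteq> 2"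
    and f45: "firstc (n div 2) (\<lambda>l. l \<in> {4,5}) 4 q"
    using 5(3) unfolding q_def qc_def P5_def P4_def P3_def by blast+
  have vi: "n > 1 \<longrightarrow> q 1 \<in> {1,6}"
  proof
    assume "n > 1"
    then have i1: "1 \<le> (1::nat)" "1 \<le> n div 2" by auto
    have fp: "\<forall>j\<in>{1..<1::nat}. \<not> P j" for P by auto
    from labelled[OF 5(1) i1] show "q 1 \<in> {1,6}"
    proof
      assume "symq (quad C5 D5 1)"
      then show ?thesis using f1 i1 unfolding firstc_def q_def by auto
    next
      assume "skewq (quad C5 D5 1)"
      then show ?thesis using f2 i1 unfolding firstc_def q_def by auto
    qed
  qed
  have xi: "odd n \<and> (\<forall>i\<in>{1..n div 2}. q i \<noteq> 2) \<longrightarrow> qc \<noteq> 2"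
  proof
    assume a: "odd n \<and> (\<forall>i\<in>{1..n div 2}. q i \<noteq> 2)"
    have "\<forall>i\<in>{1..n div 2}. q i \<notin> {2,7}"
    proof (rule ccontr)
      assume "\<not> (\<forall>i\<in>{1..n div 2}. q i \<notin> {2,7})"
      then obtain i0 where "firstP (n div 2) (\<lambda>l. l \<in> {2,7}) q i0"
        using first_cases[of "n div 2" "\<lambda>l. l \<in> {2,7}" q] by auto
      then have "q i0 = 2" "i0 \<in> {1..n div 2}" using f27 unfolding firstc_iff firstP_def by blast+
      then show False using a by blast
    qed
    then show "qc \<noteq> 2" using c4 a by blast
  qed
  have xii: "odd n \<and> (\<forall>i\<in>{1..n div 2}. q i \<noteq> 1) \<longrightarrow> qc = 0"
  proof
    assume a: "odd n \<and> (\<forall>i\<in>{1..n div 2}. q i \<noteq> 1)"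
    have "\<forall>i\<in>{1..n div 2}. \<not> symq (q i)"
    proof (rule ccontr)
      assume "\<not> (\<forall>i\<in>{1..n div 2}. \<not> symq (q i))"
      then obtain i0 where "firstP (n div 2) symq q i0"
        using first_cases[of "n div 2" symq q] by auto
      then have "q i0 = 1" "i0 \<in> {1..n div 2}" using f1 unfolding firstc_iff firstP_def by blast+
      then show False using a by blast
    qed
    then show "qc = 0" using c3 a by blast
  qed
  have "Ccond n q qc" unfolding Ccond_def using vi f1 f2 f27 f45 xi xii by blast
  then show ?thesis using 5(1) eq unfolding q_def qc_def by blast
qed


definition act :: "bool \<Rightarrow> bool \<Rightarrow> nat \<Rightarrow> nat" where
  "act gs gk l = (if symq l then (if gs then rAl (nAl l) else l) else (if gk then rAl l else l))"
definition actc :: "bool \<Rightarrow> nat \<Rightarrow> nat" where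
  "actc gs c = (if gs then cnA c else c)"
definition lsg :: "nat \<Rightarrow> bool" where
  "lsg l \<longleftrightarrow> l \<in> {1,6}"

lemma act_sym: "symq (act gs gk l) = symq l" by (simp add: act_def ldefs)
lemma act_skew: "skewq (act gs gk l) = skewq l" by (simp add: act_def ldefs)
lemma act_range: "l \<in> {1,3,6,8} \<Longrightarrow> act gs gk l \<in> {1,3,6,8}" by (auto simp: act_def ldefs)
lemma act_lsg: "l \<in> {1,3,6,8} \<Longrightarrow> lsg (act gs gk l) = (lsg l \<noteq> (if symq l then gs else gk))"
  by (auto simp: act_def ldefs lsg_def)
lemma act_comp: "l \<in> {1,3,6,8} \<Longrightarrow> act gs gk (act gs' gk' l) = act (gs \<noteq> gs') (gk \<noteq> gk') l"
  by (auto simp: act_def ldefs)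
lemma actc_comp: "actc gs (actc gs' c) = actc (gs \<noteq> gs') c"
  by (auto simp: actc_def ldefs)
lemma actc_0: "c \<in> {0,3} \<Longrightarrow> (actc gs c = 0) = ((c = 0) \<noteq> gs)"
  by (auto simp: actc_def ldefs)
lemma act_FF: "act False False l = l" by (simp add: act_def)
lemma actc_F: "actc False c = c" by (simp add: actc_def)
lemma act_SF: "l \<in> {1,3,6,8} \<Longrightarrow> rAl (nAl l) = act True False l" by (auto simp: act_def ldefs)
lemma act_RA: "l \<in> {1,3,6,8} \<Longrightarrow> rAl l = act False True l" by (auto simp: act_def ldefs)
lemma nAl_lsg: "l \<in> {1,3,6,8} \<Longrightarrow> lsg (nAl l) = (\<not> lsg l) \<and> symq (nAl l) = symq l \<and> nAl l \<in> {1,3,6,8}"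
  by (auto simp: ldefs lsg_def)

definition RA :: "nat \<Rightarrow> int list \<Rightarrow> int list \<Rightarrow> int list \<Rightarrow> int list \<Rightarrow> int list \<Rightarrow> int list \<Rightarrow> bool \<Rightarrow> bool \<Rightarrow> bool" where
  "RA n A C D A' C' D' gs gk \<longleftrightarrow> (A',A',C',D') \<in> NS n \<and> NS_equiv n (A,A,C,D) (A',A',C',D') \<and>
     (\<forall>i\<in>{1..n div 2}. quad A' A' i = act gs gk (quad A A i)) \<and> (odd n \<longrightarrow> central A' A' = actc gs (central A A))"

lemma A_range: "(A,A,C,D) \<in> NS n \<Longrightarrow> i \<in> {1..n div 2} \<Longrightarrow> quad A A i \<in> {1,3,6,8}"
  using quad_A_range[of A i] by (auto simp: NS_iff)

lemma A_crange: "(A,A,C,D) \<in> NS n \<Longrightarrow> odd n \<Longrightarrow> central A A \<in> {0,3}"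
  using central_A_range[of A] by (auto simp: NS_iff)

lemma RA_refl: "(A,A,C,D) \<in> NS n \<Longrightarrow> RA n A C D A C D False False"
  by (simp add: RA_def equiv_refl act_FF actc_F)

lemma RA_trans: "(A,A,C,D) \<in> NS n \<Longrightarrow> RA n A C D A1 C1 D1 gs gk \<Longrightarrow> RA n A1 C1 D1 A2 C2 D2 gs' gk' \<Longrightarrow>
   RA n A C D A2 C2 D2 (gs' \<noteq> gs) (gk' \<noteq> gk)"
  unfolding RA_def using equiv_trans act_comp A_range actc_comp by auto

lemma RA_SF: assumes S: "(A,A,C,D) \<in> NS n" shows "RA n A C D (revseq (negseq A)) C D True False"
proof -
  have b: "binary_seq A" "length A = n" using S by (auto simp: NS_iff)
  have s1: "(negseq A, negseq A, C, D) \<in> NS n \<and> NS_equiv n (A,A,C,D) (negseq A, negseq A, C, D)" using step_negA[OF S] .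
  note s2 = step_revA[OF s1[THEN conjunct1]]
  show ?thesis unfolding RA_def
  proof (intro conjI)
    show "(revseq (negseq A), revseq (negseq A), C, D) \<in> NS n" using s2 by blast
    show "NS_equiv n (A, A, C, D) (revseq (negseq A), revseq (negseq A), C, D)" using s1 s2 equiv_trans by blast
    show "\<forall>i\<in>{1..n div 2}. quad (revseq (negseq A)) (revseq (negseq A)) i = act True False (quad A A i)"
      using quad_revA[OF bin_neg[OF b(1)]] quad_negA[OF b(1)] act_SF A_range[OF S] b by (simp add: len_ops)
    show "odd n \<longrightarrow> central (revseq (negseq A)) (revseq (negseq A)) = actc True (central A A)"
      using central_revA[OF bin_neg[OF b(1)]] central_negA[OF b(1)] b by (simp add: len_ops actc_def)
  qed
qed

lemma RA_RA: assumes S: "(A,A,C,D) \<in> NS n" shows "RA n A C D (revseq A) C D False True"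
proof -
  have b: "binary_seq A" "length A = n" using S by (auto simp: NS_iff)
  note s2 = step_revA[OF S]
  show ?thesis unfolding RA_def
  proof (intro conjI)
    show "(revseq A, revseq A, C, D) \<in> NS n" using s2 by blast
    show "NS_equiv n (A, A, C, D) (revseq A, revseq A, C, D)" using s2 by blast
    show "\<forall>i\<in>{1..n div 2}. quad (revseq A) (revseq A) i = act False True (quad A A i)"
      using quad_revA[OF b(1)] act_RA A_range[OF S] b by simp
    show "odd n \<longrightarrow> central (revseq A) (revseq A) = actc False (central A A)"
      using central_revA[OF b(1)] b by (simp add: actc_def)
  qed
qed


lemma RA_est: "RA n A C D A' C' D' gs gk \<Longrightarrow> (\<And>x. P (act gs gk x) = P x) \<Longrightarrow> firstP (n div 2) P (quad A A) i0 \<Longrightarrow>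
   act gs gk (quad A A i0) = v \<Longrightarrow> firstc (n div 2) P v (quad A' A')"
proof -
  assume a: "RA n A C D A' C' D' gs gk" "\<And>x. P (act gs gk x) = P x" "firstP (n div 2) P (quad A A) i0"
     "act gs gk (quad A A i0) = v"
  show ?thesis
  proof (rule firstc_est[of P "act gs gk"])
    show "\<forall>i\<in>{1..n div 2}. quad A' A' i = act gs gk (quad A A i)" using a(1) by (simp add: RA_def)
    fix i assume "firstP (n div 2) P (quad A A) i"
    then have "i = i0" using a(3) first_uniq by blast
    then show "act gs gk (quad A A i) = v" using a(4) by simp
  qed (rule a(2))
qed

lemma RA_pres: "RA n A C D A' C' D' gs gk \<Longrightarrow> (\<And>x. P (act gs gk x) = P x) \<Longrightarrow> act gs gk v = v \<Longrightarrow>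
   firstc (n div 2) P v (quad A A) \<Longrightarrow> firstc (n div 2) P v (quad A' A')"
  by (rule firstc_pres[of P "act gs gk"]) (auto simp: RA_def)

lemma RA_NS: "RA n A C D A' C' D' gs gk \<Longrightarrow> (A',A',C',D') \<in> NS n"
  by (simp add: RA_def)

lemma normA1:
  assumes S: "(A,A,C,D) \<in> NS n"
  shows "\<exists>A' C' D' gs gk. RA n A C D A' C' D' gs gk \<and> firstc (n div 2) symq 1 (quad A' A')"
proof (cases "\<forall>i\<in>{1..n div 2}. \<not> symq (quad A A i)")
  case True
  then show ?thesis using RA_refl[OF S] firstc_none[of "n div 2" symq "quad A A" 1, OF True] by blast
next
  case False
  then obtain i0 where i0: "firstP (n div 2) symq (quad A A) i0" using first_cases[of "n div 2" symq "quad A A"] by blast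
  then have "quad A A i0 \<in> {1,3,6,8}" "symq (quad A A i0)" using A_range[OF S] by (auto simp: firstP_def)
  then consider "quad A A i0 = 1" | "quad A A i0 = 8" by (auto simp: symq_def)
  then show ?thesis
  proof cases
    case 1
    have "firstc (n div 2) symq 1 (quad A A)" using RA_est[OF RA_refl[OF S], of symq i0 1] i0 act_sym 1 by (simp add: act_FF)
    then show ?thesis using RA_refl[OF S] by blast
  next
    case 2
    have "firstc (n div 2) symq 1 (quad (revseq (negseq A)) (revseq (negseq A)))"
      using RA_est[OF RA_SF[OF S], of symq i0 1] i0 act_sym 2 by (simp add: act_def ldefs)
    then show ?thesis using RA_SF[OF S] by blast
  qed
qed

lemma normA2:
  assumes S: "(A,A,C,D) \<in> NS n" and f1: "firstc (n div 2) symq 1 (quad A A)"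
  shows "\<exists>A' C' D' gs gk. RA n A C D A' C' D' gs gk \<and> firstc (n div 2) symq 1 (quad A' A') \<and>
     firstc (n div 2) skewq 6 (quad A' A')"
proof (cases "\<forall>i\<in>{1..n div 2}. \<not> skewq (quad A A i)")
  case True
  then show ?thesis using RA_refl[OF S] f1 firstc_none[of "n div 2" skewq "quad A A" 6, OF True] by blast
next
  case False
  then obtain i0 where i0: "firstP (n div 2) skewq (quad A A) i0" using first_cases[of "n div 2" skewq "quad A A"] by blast
  then have "quad A A i0 \<in> {1,3,6,8}" "skewq (quad A A i0)" using A_range[OF S] by (auto simp: firstP_def)
  then consider "quad A A i0 = 6" | "quad A A i0 = 3" by (auto simp: skewq_def)
  then show ?thesis
  proof cases
    case 1
    have "firstc (n div 2) skewq 6 (quad A A)" using RA_est[OF RA_refl[OF S], of skewq i0 6] i0 1 by (simp add: act_FF)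
    then show ?thesis using RA_refl[OF S] f1 by blast
  next
    case 2
    have R: "RA n A C D (revseq A) C D False True" using RA_RA[OF S] .
    have "firstc (n div 2) skewq 6 (quad (revseq A) (revseq A))"
      using RA_est[OF R, of skewq i0 6] i0 2 act_skew by (simp add: act_def ldefs)
    moreover have "firstc (n div 2) symq 1 (quad (revseq A) (revseq A))"
      using RA_pres[OF R, of symq 1] f1 act_sym by (simp add: act_def ldefs)
    ultimately show ?thesis using R by blast
  qed
qed

lemma normA3:
  assumes S: "(A,A,C,D) \<in> NS n" and f1: "firstc (n div 2) symq 1 (quad A A)" and f2: "firstc (n div 2) skewq 6 (quad A A)"
  shows "\<exists>A' C' D' gs gk. RA n A C D A' C' D' gs gk \<and> firstc (n div 2) symq 1 (quad A' A') \<and>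
     firstc (n div 2) skewq 6 (quad A' A') \<and>
     (odd n \<and> (\<forall>i\<in>{1..n div 2}. \<not> symq (quad A' A' i)) \<longrightarrow> central A' A' = 0)"
proof (cases "odd n \<and> (\<forall>i\<in>{1..n div 2}. \<not> symq (quad A A i)) \<and> central A A \<noteq> 0")
  case False
  show ?thesis by (rule exI[of _ A], rule exI[of _ C], rule exI[of _ D], rule exI[of _ False], rule exI[of _ False])
    (use RA_refl[OF S] f1 f2 False in auto)
next
  case True
  then have o: "odd n" and ns: "\<forall>i\<in>{1..n div 2}. \<not> symq (quad A A i)" and c: "central A A \<noteq> 0" by auto
  have c3: "central A A = 3" using A_crange[OF S o] c by auto
  have R: "RA n A C D (revseq (negseq A)) C D True False" using RA_SF[OF S] .
  define A' where "A' = revseq (negseq A)"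
  have R': "RA n A C D A' C D True False" using R unfolding A'_def .
  have ns': "\<forall>i\<in>{1..n div 2}. \<not> symq (quad A' A' i)" using R' ns act_sym by (simp add: RA_def)
  have "firstc (n div 2) symq 1 (quad A' A')" using firstc_none[of "n div 2" symq "quad A' A'" 1, OF ns'] .
  moreover have "firstc (n div 2) skewq 6 (quad A' A')"
    using RA_pres[OF R', of skewq 6] f2 act_skew by (simp add: act_def ldefs)
  moreover have "central A' A' = 0" using R' o c3 by (simp add: RA_def actc_def ldefs)
  ultimately show ?thesis using R' by blast
qed

lemma NormA:
  assumes S: "(A,A,C,D) \<in> NS n"
  shows "\<exists>A' C' D' gs gk. RA n A C D A' C' D' gs gk \<and> firstc (n div 2) symq 1 (quad A' A') \<and>
     firstc (n div 2) skewq 6 (quad A' A') \<and>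
     (odd n \<and> (\<forall>i\<in>{1..n div 2}. \<not> symq (quad A' A' i)) \<longrightarrow> central A' A' = 0)"
proof -
  obtain A1 C1 D1 gs1 gk1 where 1: "RA n A C D A1 C1 D1 gs1 gk1" "firstc (n div 2) symq 1 (quad A1 A1)"
    using normA1[OF S] by blast
  obtain A2 C2 D2 gs2 gk2 where 2: "RA n A1 C1 D1 A2 C2 D2 gs2 gk2" "firstc (n div 2) symq 1 (quad A2 A2)"
    "firstc (n div 2) skewq 6 (quad A2 A2)"
    using normA2[OF RA_NS[OF 1(1)] 1(2)] by blast
  obtain A3 C3 D3 gs3 gk3 where 3: "RA n A2 C2 D2 A3 C3 D3 gs3 gk3" "firstc (n div 2) symq 1 (quad A3 A3)"
    "firstc (n div 2) skewq 6 (quad A3 A3)"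
    "odd n \<and> (\<forall>i\<in>{1..n div 2}. \<not> symq (quad A3 A3 i)) \<longrightarrow> central A3 A3 = 0"
    using normA3[OF RA_NS[OF 2(1)] 2(2,3)] by blast
  have "RA n A C D A3 C3 D3 (gs3 \<noteq> (gs2 \<noteq> gs1)) (gk3 \<noteq> (gk2 \<noteq> gk1))"
    using RA_trans[OF S RA_trans[OF S 1(1) 2(1)] 3(1)] .
  then show ?thesis using 3(2-4) by blast
qed


lemma ALT_odd:
  assumes S: "(A,A,C,D) \<in> NS n" and o: "odd n"
  shows "(altseq A, altseq A, altseq C, altseq D) \<in> NS n \<and> NS_equiv n (A,A,C,D) (altseq A, altseq A, altseq C, altseq D) \<and>
    (\<forall>i\<in>{1..n div 2}. quad (altseq A) (altseq A) i = (if even i then nAl (quad A A i) else quad A A i)) \<and>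
    central (altseq A) (altseq A) = (if odd (n div 2) then cnA (central A A) else central A A)"
proof -
  have b: "binary_seq A" "length A = n" using S by (auto simp: NS_iff)
  have 2: "\<forall>i\<in>{1..n div 2}. quad (altseq A) (altseq A) i = (if even i then nAl (quad A A i) else quad A A i)"
  proof
    fix i assume "i \<in> {1..n div 2}"
    then show "quad (altseq A) (altseq A) i = (if even i then nAl (quad A A i) else quad A A i)"
      using quad_altA_odd[OF b(1), of i] b o by simp
  qed
  have 3: "central (altseq A) (altseq A) = (if odd (n div 2) then cnA (central A A) else central A A)"
    using central_altA[OF b(1)] b o by simp
  show ?thesis using step_alt[OF S] 2 3 by blast
qed

lemma ALT_even1:
  assumes S: "(A,A,C,D) \<in> NS n" and e: "even n" and n: "n \<ge> 2"
  shows "(altseq A, altseq A, altseq C, altseq D) \<in> NS n \<and> NS_equiv n (A,A,C,D) (altseq A, altseq A, altseq C, altseq D) \<and>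
    quad (altseq A) (altseq A) 1 = alt1l (quad A A 1)"
proof -
  have b: "binary_seq A" "length A = n" using S by (auto simp: NS_iff)
  have "1 \<le> (1::nat)" "1 \<le> length A div 2" using n b by auto
  then have "quad (altseq A) (altseq A) 1 = alt1l (quad A A 1)" using quad_altA_even1[OF b(1)] b e by simp
  then show ?thesis using step_alt[OF S] by blast
qed

definition V1 :: "nat \<Rightarrow> (nat \<Rightarrow> nat) \<Rightarrow> bool" where
  "V1 m p \<longleftrightarrow> (\<forall>i\<in>{1..<m}. same_type (p i) (p (i + 1)) \<and>
              (\<forall>j\<in>{1..<i}. \<not> same_type (p j) (p (j + 1))) \<longrightarrow> p (i + 1) \<in> {1, 6})"
definition V2 :: "nat \<Rightarrow> (nat \<Rightarrow> nat) \<Rightarrow> nat \<Rightarrow> bool" where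
  "V2 m p pc \<longleftrightarrow> ((\<forall>i\<in>{1..<m}. \<not> same_type (p i) (p (i + 1))) \<and> m \<ge> 1 \<and> symq (p m) \<longrightarrow> pc = 0)"

definition Acond :: "nat \<Rightarrow> (nat \<Rightarrow> nat) \<Rightarrow> nat \<Rightarrow> bool" where
  "Acond n p pc \<longleftrightarrow> (even n \<longrightarrow> p 1 = 1) \<and> (odd n \<and> n > 1 \<longrightarrow> p 1 \<in> {1, 6}) \<and>
     firstc (n div 2) symq 1 p \<and> firstc (n div 2) skewq 6 p \<and>
     (odd n \<and> (\<forall>i\<in>{1..n div 2}. skewq (p i)) \<longrightarrow> pc = 0) \<and>
     (odd n \<longrightarrow> V1 (n div 2) p \<and> V2 (n div 2) p pc)"

lemma st_iff: "x \<in> {1,3,6,8} \<Longrightarrow> y \<in> {1,3,6,8} \<Longrightarrow> same_type x y = (symq x = symq y)"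
  by (elim insertE emptyE; simp add: same_type_def symq_def skewq_def)

lemma range_types: "x \<in> {1,3,6,8} \<Longrightarrow> skewq x = (\<not> symq x)"
  by (elim insertE emptyE; simp add: symq_def skewq_def)

lemma Acond_odd:
  assumes o: "odd n" and r: "\<forall>i\<in>{1..n div 2}. p i \<in> {1,3,6,8}"
    and f1: "firstc (n div 2) symq 1 p" and f2: "firstc (n div 2) skewq 6 p"
    and c: "(\<forall>i\<in>{1..n div 2}. \<not> symq (p i)) \<longrightarrow> pc = 0"
    and v: "V1 (n div 2) p" "V2 (n div 2) p pc"
  shows "Acond n p pc"
proof -
  have "n > 1 \<longrightarrow> p 1 \<in> {1,6}"
  proof
    assume "n > 1"
    then have i1: "(1::nat) \<in> {1..n div 2}" using o by auto
    show "p 1 \<in> {1,6}"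
    proof (cases "symq (p 1)")
      case True then show ?thesis using f1 i1 unfolding firstc_def by auto
    next
      case False then have "skewq (p 1)" using r i1 range_types by blast
      then show ?thesis using f2 i1 unfolding firstc_def by auto
    qed
  qed
  moreover have "(\<forall>i\<in>{1..n div 2}. skewq (p i)) \<longrightarrow> pc = 0" using c r range_types by blast
  ultimately show ?thesis unfolding Acond_def using o f1 f2 v by auto
qed

lemma alt_pattern:
  fixes tp :: "nat \<Rightarrow> bool" and i d :: nat
  assumes a: "\<forall>j\<in>{1..<i}. tp (j + 1) = (\<not> tp j)"
  shows "d < i \<Longrightarrow> tp (i - d) = (if even d then tp i else \<not> tp i)"
proof (induction d)
  case 0 then show ?case by simp
next
  case (Suc d)
  then have "i - Suc d \<in> {1..<i}" by auto
  then have "tp (i - Suc d + 1) = (\<not> tp (i - Suc d))" using a by blast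
  moreover have "i - Suc d + 1 = i - d" using Suc.prems by auto
  ultimately show ?case using Suc by auto
qed

lemma norm_first:
  assumes f1: "firstc m symq 1 p" and f2: "firstc m skewq 6 p" and r: "\<forall>i\<in>{1..m}. p i \<in> {1,3,6,8}"
    and rr: "rr = 1 \<or> rr = 2" "rr \<le> m" and d: "rr = 2 \<longrightarrow> symq (p 1) \<noteq> symq (p 2)"
  shows "lsg (p rr)"
proof -
  have rm: "rr \<in> {1..m}" using rr by auto
  have one: "(1::nat) \<in> {1..m}" using rr by auto
  show ?thesis
  proof (cases "symq (p rr)")
    case True
    have "\<forall>j\<in>{1..<rr}. \<not> symq (p j)"
    proof
      fix j assume "j \<in> {1..<rr}"
      then have "j = 1" "rr = 2" using rr by auto
      then show "\<not> symq (p j)" using d True by auto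
    qed
    then show ?thesis using f1 rm True unfolding firstc_def lsg_def by auto
  next
    case False
    then have sk: "skewq (p rr)" using r rm range_types by blast
    have "\<forall>j\<in>{1..<rr}. \<not> skewq (p j)"
    proof
      fix j assume "j \<in> {1..<rr}"
      then have "j = 1" "rr = 2" using rr by auto
      then show "\<not> skewq (p j)" using d False r one range_types by auto
    qed
    then show ?thesis using f2 rm sk unfolding firstc_def lsg_def by auto
  qed
qed


lemma RA_E: "RA n A C D A' C' D' gs gk \<Longrightarrow> (A',A',C',D') \<in> NS n \<and> NS_equiv n (A,A,C,D) (A',A',C',D')"
  by (simp add: RA_def)

lemma A_even:
  assumes S: "(A,A,C,D) \<in> NS n" and e: "even n" and n1: "n \<ge> 1"
  shows "\<exists>A' C' D'. (A',A',C',D') \<in> NS n \<and> NS_equiv n (A,A,C,D) (A',A',C',D') \<and> Acond n (quad A' A') (central A' A')"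
proof -
  have n2: "n \<ge> 2" using e n1 by presburger
  have one: "(1::nat) \<in> {1..n div 2}" using n2 by auto
  obtain A1 C1 D1 where 1: "(A1,A1,C1,D1) \<in> NS n" "NS_equiv n (A,A,C,D) (A1,A1,C1,D1)" "symq (quad A1 A1 1)"
  proof (cases "symq (quad A A 1)")
    case True
    then show ?thesis using that S equiv_refl by blast
  next
    case False
    have "quad A A 1 \<in> {1,3,6,8}" using A_range[OF S one] .
    then have "quad A A 1 \<in> {3,6}" using False by (auto simp: symq_def)
    then have "symq (alt1l (quad A A 1))" by (auto simp: ldefs)
    then show ?thesis using that ALT_even1[OF S e n2] by auto
  qed
  obtain A2 C2 D2 gs gk where 2: "RA n A1 C1 D1 A2 C2 D2 gs gk" "firstc (n div 2) symq 1 (quad A2 A2)"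
    "firstc (n div 2) skewq 6 (quad A2 A2)"
    using NormA[OF 1(1)] by blast
  have "quad A2 A2 1 = act gs gk (quad A1 A1 1)" using 2(1) one by (simp add: RA_def)
  then have "symq (quad A2 A2 1)" using 1(3) act_sym by simp
  then have "quad A2 A2 1 = 1" using 2(2) one unfolding firstc_def by auto
  then have "Acond n (quad A2 A2) (central A2 A2)" unfolding Acond_def using e 2(2,3) by auto
  then show ?thesis using RA_E[OF 2(1)] 1(2) equiv_trans by blast
qed


lemma adj_first_uniq:
  fixes m i i' :: nat
  assumes "i \<in> {1..<m}" "P i" "\<forall>j\<in>{1..<i}. \<not> P j" "i' \<in> {1..<m}" "P i'" "\<forall>j\<in>{1..<i'}. \<not> P j"
  shows "i = i'"
proof (rule linorder_cases[of i i'])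
  assume "i < i'" then show ?thesis using assms by auto
next
  assume "i' < i" then show ?thesis using assms by auto
qed

lemma adj_first_ex:
  fixes m :: nat
  assumes "\<exists>i\<in>{1..<m}. P i"
  shows "\<exists>i. i \<in> {1..<m} \<and> P i \<and> (\<forall>j\<in>{1..<i}. \<not> P j)"
proof -
  obtain i where i: "i \<in> {1..<m}" "P i" using assms by blast
  then have "i \<in> {1..m-1}" "P (id i)" by auto
  then have "\<exists>i\<in>{1..m-1}. P (id i)" by blast
  then obtain i where "firstP (m-1) P id i" using first_ex[of "m-1" P id] by blast
  then show ?thesis unfolding firstP_def by auto
qed

lemma A_odd:
  assumes S: "(A,A,C,D) \<in> NS n" and o: "odd n"
  shows "\<exists>A' C' D'. (A',A',C',D') \<in> NS n \<and> NS_equiv n (A,A,C,D) (A',A',C',D') \<and> Acond n (quad A' A') (central A' A')"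
proof -
  define m where "m = n div 2"
  obtain A1 C1 D1 gs1 gk1 where N1: "RA n A C D A1 C1 D1 gs1 gk1" "firstc m symq 1 (quad A1 A1)"
    "firstc m skewq 6 (quad A1 A1)" "odd n \<and> (\<forall>i\<in>{1..m}. \<not> symq (quad A1 A1 i)) \<longrightarrow> central A1 A1 = 0"
    using NormA[OF S] unfolding m_def by blast
  have S1: "(A1,A1,C1,D1) \<in> NS n" "NS_equiv n (A,A,C,D) (A1,A1,C1,D1)" using RA_E[OF N1(1)] by auto
  define p1 where "p1 = quad A1 A1"
  define pc1 where "pc1 = central A1 A1"
  have r1: "\<forall>i\<in>{1..m}. p1 i \<in> {1,3,6,8}" using A_range[OF S1(1)] unfolding p1_def m_def by blast
  show ?thesis
  proof (cases "V1 m p1 \<and> V2 m p1 pc1")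
    case True
    have "Acond n p1 pc1" using Acond_odd[OF o] r1 N1(2-4) True o unfolding p1_def pc1_def m_def by blast
    then show ?thesis using S1 unfolding p1_def pc1_def by blast
  next
    case notV: False
    note AL = ALT_odd[OF S1(1) o]
    define A2 where "A2 = altseq A1"
    define C2 where "C2 = altseq C1"
    define D2 where "D2 = altseq D1"
    have S2: "(A2,A2,C2,D2) \<in> NS n" "NS_equiv n (A1,A1,C1,D1) (A2,A2,C2,D2)"
      using AL unfolding A2_def C2_def D2_def by blast+
    have p2: "\<forall>i\<in>{1..m}. quad A2 A2 i = (if even i then nAl (p1 i) else p1 i)"
      using AL unfolding A2_def p1_def m_def by blast
    have pc2: "central A2 A2 = (if odd m then cnA pc1 else pc1)"
      using AL unfolding A2_def pc1_def m_def by blast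
    obtain A3 C3 D3 gs gk where N3: "RA n A2 C2 D2 A3 C3 D3 gs gk" "firstc m symq 1 (quad A3 A3)"
      "firstc m skewq 6 (quad A3 A3)" "odd n \<and> (\<forall>i\<in>{1..m}. \<not> symq (quad A3 A3 i)) \<longrightarrow> central A3 A3 = 0"
      using NormA[OF S2(1)] unfolding m_def by blast
    have S3: "(A3,A3,C3,D3) \<in> NS n" "NS_equiv n (A,A,C,D) (A3,A3,C3,D3)"
      using RA_E[OF N3(1)] S1(2) S2(2) equiv_trans by blast+
    define p3 where "p3 = quad A3 A3"
    define pc3 where "pc3 = central A3 A3"
    have p3: "\<forall>i\<in>{1..m}. p3 i = act gs gk (quad A2 A2 i)" using N3(1) unfolding RA_def p3_def m_def by blast
    have pc3: "pc3 = actc gs (central A2 A2)" using N3(1) o unfolding RA_def pc3_def by blast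
    have r3: "\<forall>i\<in>{1..m}. p3 i \<in> {1,3,6,8}" using A_range[OF S3(1)] unfolding p3_def m_def by blast
    have T: "symq (p3 x) = symq (p1 x)" if x: "x \<in> {1..m}" for x
      using p3 p2 x r1 act_sym nAl_lsg by auto
    have L: "lsg (p3 x) = ((lsg (p1 x) \<noteq> even x) \<noteq> (if symq (p1 x) then gs else gk))" if x: "x \<in> {1..m}" for x
    proof -
      have "p1 x \<in> {1,3,6,8}" using r1 x by blast
      then have q2: "quad A2 A2 x \<in> {1,3,6,8}" "lsg (quad A2 A2 x) = (lsg (p1 x) \<noteq> even x)"
        "symq (quad A2 A2 x) = symq (p1 x)"
        using p2 x nAl_lsg by auto
      show ?thesis using act_lsg[OF q2(1), of gs gk] q2(2,3) p3 x by auto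
    qed
    have adj: "same_type (p3 i) (p3 (i+1)) = same_type (p1 i) (p1 (i+1))" if i: "i \<in> {1..<m}" for i
    proof -
      have i1: "i \<in> {1..m}" "i + 1 \<in> {1..m}" using i by auto
      show ?thesis using st_iff r1 r3 i1 T[OF i1(1)] T[OF i1(2)] by metis
    qed
    have tpalt: "symq (p1 (j+1)) = (\<not> symq (p1 j))" if "j \<in> {1..<m}" "\<not> same_type (p1 j) (p1 (j+1))" for j
    proof -
      have "j \<in> {1..m}" "j + 1 \<in> {1..m}" using that by auto
      then show ?thesis using st_iff[of "p1 j" "p1 (j+1)"] r1 that(2) by auto
    qed
    have V: "V1 m p3 \<and> V2 m p3 pc3"
    proof (cases "\<exists>i\<in>{1..<m}. same_type (p1 i) (p1 (i+1))")
      case True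
      then obtain i where i: "i \<in> {1..<m}" "same_type (p1 i) (p1 (i+1))" "\<forall>j\<in>{1..<i}. \<not> same_type (p1 j) (p1 (j+1))"
        using adj_first_ex[of m "\<lambda>k. same_type (p1 k) (p1 (k+1))"] by blast
      have V2_1: "V2 m p1 pc1" unfolding V2_def using i by blast
      have V2_3: "V2 m p3 pc3" unfolding V2_def using i adj by blast
      have bad: "p1 (i+1) \<notin> {1,6}"
      proof
        assume good: "p1 (i+1) \<in> {1,6}"
        have "V1 m p1" unfolding V1_def
        proof (intro ballI impI)
          fix i' assume i': "i' \<in> {1..<m}" "same_type (p1 i') (p1 (i'+1)) \<and> (\<forall>j\<in>{1..<i'}. \<not> same_type (p1 j) (p1 (j+1)))"
          then have "i = i'" using adj_first_uniq[of i m "\<lambda>k. same_type (p1 k) (p1 (k+1))" i'] i by blast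
          then show "p1 (i'+1) \<in> {1,6}" using good by simp
        qed
        then show False using notV V2_1 by blast
      qed
      define rr where "rr = (if odd i then 1 else (2::nat))"
      have im: "i \<in> {1..m}" "i + 1 \<in> {1..m}" using i by auto
      have alt: "\<forall>j\<in>{1..<i}. symq (p1 (j+1)) = (\<not> symq (p1 j))" using i(1,3) tpalt by auto
      have rri: "rr \<le> i" "rr = 1 \<or> rr = 2" "even rr = even i" using i unfolding rr_def by auto
      have tprr: "symq (p1 rr) = symq (p1 i)"
      proof -
        have "i - rr < i" "even (i - rr)" using rri i by auto
        moreover have "i - (i - rr) = rr" using rri by auto
        ultimately show ?thesis using alt_pattern[OF alt, of "i - rr"] by auto
      qed
      have d1: "rr = 2 \<longrightarrow> symq (p1 1) \<noteq> symq (p1 2)"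
      proof
        assume "rr = 2"
        then have "(1::nat) \<in> {1..<i}" using rri i unfolding rr_def by (auto split: if_splits)
        then have "symq (p1 (1+1)) = (\<not> symq (p1 1))" using alt by blast
        then show "symq (p1 1) \<noteq> symq (p1 2)" by (simp add: numeral_2_eq_2)
      qed
      have rrm: "rr \<le> m" "rr \<in> {1..m}" using rri im by auto
      have tpi: "symq (p1 (i+1)) = symq (p1 i)" using st_iff[of "p1 i" "p1 (i+1)"] r1 im i(2) by auto
      have ls1: "lsg (p1 rr)" using norm_first[OF N1(2,3)[folded p1_def] r1 rri(2) rrm(1) d1] .
      have d3: "rr = 2 \<longrightarrow> symq (p3 1) \<noteq> symq (p3 2)"
      proof
        assume r2: "rr = 2"
        then have "(1::nat) \<in> {1..m}" "(2::nat) \<in> {1..m}" using rrm by auto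
        then show "symq (p3 1) \<noteq> symq (p3 2)" using d1 r2 T by auto
      qed
      have ls3: "lsg (p3 rr)" using norm_first[OF N3(2,3)[folded p3_def] r3 rri(2) rrm(1) d3] .
      have lb: "\<not> lsg (p1 (i+1))" using bad unfolding lsg_def .
      have "lsg (p3 (i+1))" using L[OF im(2)] L[OF rrm(2)] ls1 ls3 lb tpi tprr rri(3) by auto
      then have good3: "p3 (i+1) \<in> {1,6}" unfolding lsg_def .
      have "V1 m p3" unfolding V1_def
      proof (intro ballI impI)
        fix i' assume i': "i' \<in> {1..<m}" "same_type (p3 i') (p3 (i'+1)) \<and> (\<forall>j\<in>{1..<i'}. \<not> same_type (p3 j) (p3 (j+1)))"
        then have "same_type (p1 i') (p1 (i'+1)) \<and> (\<forall>j\<in>{1..<i'}. \<not> same_type (p1 j) (p1 (j+1)))"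
          using adj by auto
        then have "i = i'" using adj_first_uniq[of i m "\<lambda>k. same_type (p1 k) (p1 (k+1))" i'] i i'(1) by blast
        then show "p3 (i'+1) \<in> {1,6}" using good3 by simp
      qed
      then show ?thesis using V2_3 by blast
    next
      case False
      then have noadj: "\<forall>i\<in>{1..<m}. \<not> same_type (p1 i) (p1 (i+1))" by blast
      have noadj3: "\<forall>i\<in>{1..<m}. \<not> same_type (p3 i) (p3 (i+1))" using noadj adj by blast
      have V1_1: "V1 m p1" unfolding V1_def using noadj by blast
      have V1_3: "V1 m p3" unfolding V1_def using noadj3 by blast
      have "\<not> V2 m p1 pc1" using notV V1_1 by blast
      then have m1: "m \<ge> 1" and sm: "symq (p1 m)" and pcn: "pc1 \<noteq> 0" unfolding V2_def using noadj by auto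
      have "pc1 \<in> {0,3}" using A_crange[OF S1(1) o] unfolding pc1_def .
      then have pc13: "pc1 = 3" using pcn by auto
      define rr where "rr = (if odd m then 1 else (2::nat))"
      have alt: "\<forall>j\<in>{1..<m}. symq (p1 (j+1)) = (\<not> symq (p1 j))" using noadj tpalt by auto
      have rri: "rr \<le> m" "rr = 1 \<or> rr = 2" "even rr = even m" using m1 unfolding rr_def by auto
      have rrm: "rr \<in> {1..m}" using rri by auto
      have tprr: "symq (p1 rr)"
      proof -
        have "m - rr < m" "even (m - rr)" using rri m1 by auto
        moreover have "m - (m - rr) = rr" using rri by auto
        ultimately show ?thesis using alt_pattern[OF alt, of "m - rr"] sm by auto
      qed
      have d1: "rr = 2 \<longrightarrow> symq (p1 1) \<noteq> symq (p1 2)"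
      proof
        assume "rr = 2"
        then have "(1::nat) \<in> {1..<m}" using rri m1 unfolding rr_def by (auto split: if_splits)
        then have "symq (p1 (1+1)) = (\<not> symq (p1 1))" using alt by blast
        then show "symq (p1 1) \<noteq> symq (p1 2)" by (simp add: numeral_2_eq_2)
      qed
      have ls1: "lsg (p1 rr)" using norm_first[OF N1(2,3)[folded p1_def] r1 rri(2) rri(1) d1] .
      have d3: "rr = 2 \<longrightarrow> symq (p3 1) \<noteq> symq (p3 2)"
      proof
        assume r2: "rr = 2"
        then have "(1::nat) \<in> {1..m}" "(2::nat) \<in> {1..m}" using rri by auto
        then show "symq (p3 1) \<noteq> symq (p3 2)" using d1 r2 T by auto
      qed
      have ls3: "lsg (p3 rr)" using norm_first[OF N3(2,3)[folded p3_def] r3 rri(2) rri(1) d3] .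
      have eqs: "gs = even m" using L[OF rrm] ls1 ls3 tprr rri(3) by auto
      have pc2v: "central A2 A2 = (if odd m then 0 else 3)" using pc2 pc13 by (simp add: ldefs)
      have "pc3 = 0" using pc3 pc2v eqs by (auto simp: actc_def ldefs)
      then have "V2 m p3 pc3" unfolding V2_def by blast
      then show ?thesis using V1_3 by blast
    qed
    have "Acond n p3 pc3" using Acond_odd[OF o] r3 N3(2-4) V o unfolding p3_def pc3_def m_def by blast
    then show ?thesis using S3 unfolding p3_def pc3_def by blast
  qed
qed


lemma canonical_of:
  assumes l: "length A = n" and a: "Acond n (quad A A) (central A A)" and c: "Ccond n (quad C D) (central C D)"
  shows "canonical (A, A, C, D)"
  unfolding canonical_def prod.case Let_def l
  using conjI[OF a c] unfolding Acond_def Ccond_def firstc_def V1_def V2_def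
  by (simp only: conj_assoc)

theorem proposition3p2:
  fixes n :: nat
  assumes "n \<ge> 1"
  shows "\<forall>S\<in>NS n. \<exists>T. NS_equiv n S T \<and> canonical T"
proof
  fix S assume S0: "S \<in> NS n"
  obtain A B C D where SS: "S = (A, B, C, D)" by (cases S) auto
  have BA: "B = A" using S0 SS by (simp add: NS_iff)
  have S: "(A,A,C,D) \<in> NS n" using S0 SS BA by simp
  obtain A1 C1 D1 where 1: "(A1,A1,C1,D1) \<in> NS n" "NS_equiv n (A,A,C,D) (A1,A1,C1,D1)"
    "Acond n (quad A1 A1) (central A1 A1)"
  proof (cases "even n")
    case True then show ?thesis using that A_even[OF S True assms] by blast
  next
    case False then show ?thesis using that A_odd[OF S] by blast
  qed
  obtain C2 D2 where 2: "(A1,A1,C2,D2) \<in> NS n" "NS_equiv n (A1,A1,C1,D1) (A1,A1,C2,D2)"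
    "Ccond n (quad C2 D2) (central C2 D2)"
    using CD_stage[OF 1(1)] by blast
  have l: "length A1 = n" using 1(1) by (simp add: NS_iff)
  have "canonical (A1, A1, C2, D2)" using canonical_of[OF l 1(3) 2(3)] .
  moreover have "NS_equiv n S (A1, A1, C2, D2)" using SS BA 1(2) 2(2) equiv_trans by blast
  ultimately show "\<exists>T. NS_equiv n S T \<and> canonical T" by blast
qed


end
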